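(* Let $\mathbb{k}$ be an algebraically closed field of characteristic $0$, $n\ge1$, $0\le v\le n-1$ integers, $\xi\in\mathbb{k}$ a primitive $n$-th root of unity, $m:=n/\gcd(n,v)$. Then, as an algebra, the finite dual $T_\infty(n,v,\xi)^\circ$ is generated by the elements $\psi_\lambda$ ($\lambda\in\mathbb{k}$), $\omega$, $E_2$ and $E_1$ defined below.
   Context: $T_\infty(n,v,\xi)$ is the Hopf algebra generated by $g,x$ with relations $g^n=1$, $xg=\xi gx$, $\Delta(g)=g\otimes g$, $\Delta(x)=1\otimes x+x\otimes g^v$, $\varepsilon(g)=1$, $\varepsilon(x)=0$, $S(g)=g^{n-1}$, $S(x)=-\xi^{-v}g^{n-v}x$; it has basis $\{g^jx^l: 0\le j\le n-1, l\in\mathbb{N}\}$. The finite dual $H^\circ$ of a Hopf algebra $H$ is the set of $f\in H^*$ vanishing on some ideal of finite codimension, with the algebra structure dual to the coalgebra structure of $H$. Define linear functionals on $T_\infty(n,v,\xi)$ on this basis by: $\psi_\lambda(g^jx^l)=\lambda^{l/m}$ if $m\mid l$ and $0$ otherwise; $\omega(g^jx^l)=\delta_{l,0}\xi^j$; $E_1(g^jx^l)=\delta_{l,1}$; $E_2(g^jx^l)=\delta_{l,m}$ (these lie in $T_\infty(n,v,\xi)^\circ$). *)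

theory Defs
  imports "HOL-Computational_Algebra.Polynomial"
begin

text \<open>
The basis element g^j x^l (0 <= j < n, l in nat) is indexed by the pair (j,l).
An element of H is a finitely supported function nat*nat => 'k vanishing at indices
(j,l) with j >= n; an element of H (x) H is a finitely supported function on pairs of
basis indices.  A linear functional on H is determined by its values on the basis,
so functionals are functions nat*nat => 'k (normalised to be 0 at j >= n).
\<close>

definition supp :: "('a \<Rightarrow> 'k::zero) \<Rightarrow> 'a set" where
  "supp f = {p. f p \<noteq> 0}"

definition single :: "'a \<Rightarrow> 'k \<Rightarrow> ('a \<Rightarrow> 'k::zero)" where
  "single a c = (\<lambda>p. if p = a then c else 0)"

text \<open>Product of basis elements: (g^a x^b)(g^c x^d) = xi^(b c) g^((a+c) mod n) x^(b+d),
  using x g = xi g x.\<close>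
definition bcoef :: "'k::field \<Rightarrow> nat \<times> nat \<Rightarrow> nat \<times> nat \<Rightarrow> 'k" where
  "bcoef \<xi> p q = \<xi> ^ (snd p * fst q)"

definition bidx :: "nat \<Rightarrow> nat \<times> nat \<Rightarrow> nat \<times> nat \<Rightarrow> nat \<times> nat" where
  "bidx n p q = ((fst p + fst q) mod n, snd p + snd q)"

definition Hspace :: "nat \<Rightarrow> (nat \<times> nat \<Rightarrow> 'k::field) set" where
  "Hspace n = {a. finite (supp a) \<and> (\<forall>j l. n \<le> j \<longrightarrow> a (j, l) = 0)}"

definition hmul :: "nat \<Rightarrow> 'k::field \<Rightarrow> (nat \<times> nat \<Rightarrow> 'k) \<Rightarrow> (nat \<times> nat \<Rightarrow> 'k)
    \<Rightarrow> (nat \<times> nat \<Rightarrow> 'k)" where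
  "hmul n \<xi> a b = (\<lambda>t. \<Sum>p\<in>supp a. \<Sum>q\<in>supp b.
      (if bidx n p q = t then bcoef \<xi> p q * a p * b q else 0))"

definition tmul :: "nat \<Rightarrow> 'k::field
    \<Rightarrow> ((nat \<times> nat) \<times> (nat \<times> nat) \<Rightarrow> 'k)
    \<Rightarrow> ((nat \<times> nat) \<times> (nat \<times> nat) \<Rightarrow> 'k)
    \<Rightarrow> ((nat \<times> nat) \<times> (nat \<times> nat) \<Rightarrow> 'k)" where
  "tmul n \<xi> U W = (\<lambda>t. \<Sum>s\<in>supp U. \<Sum>r\<in>supp W.
      (if (bidx n (fst s) (fst r), bidx n (snd s) (snd r)) = t
       then bcoef \<xi> (fst s) (fst r) * bcoef \<xi> (snd s) (snd r) * U s * W r else 0))"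

primrec tpow :: "nat \<Rightarrow> 'k::field \<Rightarrow> ((nat \<times> nat) \<times> (nat \<times> nat) \<Rightarrow> 'k) \<Rightarrow> nat
    \<Rightarrow> ((nat \<times> nat) \<times> (nat \<times> nat) \<Rightarrow> 'k)" where
  "tpow n \<xi> U 0 = single ((0, 0), (0, 0)) 1"
| "tpow n \<xi> U (Suc k) = tmul n \<xi> (tpow n \<xi> U k) U"

text \<open>Delta(g) = g (x) g and Delta(x) = 1 (x) x + x (x) g^v.\<close>
definition Delta_g :: "nat \<Rightarrow> ((nat \<times> nat) \<times> (nat \<times> nat) \<Rightarrow> 'k::field)" where
  "Delta_g n = single ((1 mod n, 0), (1 mod n, 0)) 1"

definition Delta_x :: "nat \<Rightarrow> nat \<Rightarrow> ((nat \<times> nat) \<times> (nat \<times> nat) \<Rightarrow> 'k::field)" where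
  "Delta_x n v = (\<lambda>t. single ((0, 0), (0, 1)) 1 t + single ((0, 1), (v mod n, 0)) 1 t)"

text \<open>Delta(g^j x^l) = Delta(g)^j Delta(x)^l, since Delta is an algebra map.\<close>
definition Delta :: "nat \<Rightarrow> nat \<Rightarrow> 'k::field \<Rightarrow> nat \<times> nat
    \<Rightarrow> ((nat \<times> nat) \<times> (nat \<times> nat) \<Rightarrow> 'k)" where
  "Delta n v \<xi> p = tmul n \<xi> (tpow n \<xi> (Delta_g n) (fst p)) (tpow n \<xi> (Delta_x n v) (snd p))"

definition conv :: "nat \<Rightarrow> nat \<Rightarrow> 'k::field \<Rightarrow> (nat \<times> nat \<Rightarrow> 'k) \<Rightarrow> (nat \<times> nat \<Rightarrow> 'k)
    \<Rightarrow> (nat \<times> nat \<Rightarrow> 'k)" where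
  "conv n v \<xi> f h = (\<lambda>p. if fst p < n then
      (\<Sum>s\<in>supp (Delta n v \<xi> p). Delta n v \<xi> p s * f (fst s) * h (snd s)) else 0)"

definition counit :: "nat \<Rightarrow> (nat \<times> nat \<Rightarrow> 'k::field)" where
  "counit n = (\<lambda>(j, l). if j < n \<and> l = 0 then 1 else 0)"

definition evalf :: "(nat \<times> nat \<Rightarrow> 'k::field) \<Rightarrow> (nat \<times> nat \<Rightarrow> 'k) \<Rightarrow> 'k" where
  "evalf f a = (\<Sum>p\<in>supp a. a p * f p)"

definition is_ideal :: "nat \<Rightarrow> 'k::field \<Rightarrow> (nat \<times> nat \<Rightarrow> 'k) set \<Rightarrow> bool" where
  "is_ideal n \<xi> I \<longleftrightarrow> I \<subseteq> Hspace n \<and> (\<lambda>_. 0) \<in> I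
     \<and> (\<forall>a\<in>I. \<forall>b\<in>I. (\<lambda>p. a p + b p) \<in> I)
     \<and> (\<forall>c. \<forall>a\<in>I. (\<lambda>p. c * a p) \<in> I)
     \<and> (\<forall>a\<in>Hspace n. \<forall>b\<in>I. hmul n \<xi> a b \<in> I \<and> hmul n \<xi> b a \<in> I)"

definition finite_codim :: "nat \<Rightarrow> (nat \<times> nat \<Rightarrow> 'k::field) set \<Rightarrow> bool" where
  "finite_codim n I \<longleftrightarrow> (\<exists>F. finite F \<and> F \<subseteq> Hspace n \<and>
     (\<forall>a\<in>Hspace n. \<exists>c. (\<lambda>p. a p - (\<Sum>h\<in>F. c h * h p)) \<in> I))"

definition finite_dual :: "nat \<Rightarrow> 'k::field \<Rightarrow> (nat \<times> nat \<Rightarrow> 'k) set" where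
  "finite_dual n \<xi> = {f. (\<forall>j l. n \<le> j \<longrightarrow> f (j, l) = 0) \<and>
     (\<exists>I. is_ideal n \<xi> I \<and> finite_codim n I \<and> (\<forall>a\<in>I. evalf f a = 0))}"

inductive_set gen_alg :: "nat \<Rightarrow> nat \<Rightarrow> 'k::field \<Rightarrow> (nat \<times> nat \<Rightarrow> 'k) set
    \<Rightarrow> (nat \<times> nat \<Rightarrow> 'k) set"
  for n v \<xi> G where
  gen: "f \<in> G \<Longrightarrow> f \<in> gen_alg n v \<xi> G"
| unit: "counit n \<in> gen_alg n v \<xi> G"
| add: "f \<in> gen_alg n v \<xi> G \<Longrightarrow> h \<in> gen_alg n v \<xi> G \<Longrightarrow> (\<lambda>p. f p + h p) \<in> gen_alg n v \<xi> G"
| smult: "f \<in> gen_alg n v \<xi> G \<Longrightarrow> (\<lambda>p. c * f p) \<in> gen_alg n v \<xi> G"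
| mult: "f \<in> gen_alg n v \<xi> G \<Longrightarrow> h \<in> gen_alg n v \<xi> G \<Longrightarrow> conv n v \<xi> f h \<in> gen_alg n v \<xi> G"

definition psi :: "nat \<Rightarrow> nat \<Rightarrow> 'k::field \<Rightarrow> (nat \<times> nat \<Rightarrow> 'k)" where
  "psi n v c = (\<lambda>(j, l). let m = n div gcd n v in
      if j < n \<and> m dvd l then c ^ (l div m) else 0)"

definition omega :: "nat \<Rightarrow> 'k::field \<Rightarrow> (nat \<times> nat \<Rightarrow> 'k)" where
  "omega n \<xi> = (\<lambda>(j, l). if j < n \<and> l = 0 then \<xi> ^ j else 0)"

definition E1 :: "nat \<Rightarrow> (nat \<times> nat \<Rightarrow> 'k::field)" where
  "E1 n = (\<lambda>(j, l). if j < n \<and> l = 1 then 1 else 0)"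

definition E2 :: "nat \<Rightarrow> nat \<Rightarrow> (nat \<times> nat \<Rightarrow> 'k::field)" where
  "E2 n v = (\<lambda>(j, l). if j < n \<and> l = n div gcd n v then 1 else 0)"

definition alg_closed_field :: "'k::field itself \<Rightarrow> bool" where
  "alg_closed_field _ \<longleftrightarrow> (\<forall>p :: 'k poly. 0 < degree p \<longrightarrow> (\<exists>x. poly p x = 0))"

end

theory Submission
  imports Defs
begin

fun qb :: "'k::field \<Rightarrow> nat \<Rightarrow> nat \<Rightarrow> 'k" where
  "qb q 0 b = (if b = 0 then 1 else 0)"
| "qb q (Suc l) 0 = 1"
| "qb q (Suc l) (Suc b) = qb q l (Suc b) + q ^ (l - b) * qb q l b"

lemma qb_0 [simp]: "qb q l 0 = 1"
  by (cases l) auto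

lemma qb_gt: "l < b \<Longrightarrow> qb q l b = 0"
proof (induction l arbitrary: b)
  case 0 then show ?case by simp
next
  case (Suc l) then show ?case by (cases b) auto
qed

lemma qb_diag [simp]: "qb q l l = 1"
  by (induction l) (auto simp: qb_gt)

lemma supp_single_sub: "supp (single a c) \<subseteq> {a}"
  by (auto simp: supp_def single_def)

lemma sum_supp_sup:
  assumes "finite A" "supp f \<subseteq> A" "\<And>x. f x = 0 \<Longrightarrow> G x = 0"
  shows "(\<Sum>x\<in>supp f. G x) = (\<Sum>x\<in>A. G x)"
  using assms by (intro sum.mono_neutral_left) (auto simp: supp_def)

lemma tmul_alt:
  assumes "finite A" "supp U \<subseteq> A" "finite B" "supp W \<subseteq> B"
  shows "tmul n \<xi> U W t = (\<Sum>s\<in>A. \<Sum>r\<in>B.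
      (if (bidx n (fst s) (fst r), bidx n (snd s) (snd r)) = t
       then bcoef \<xi> (fst s) (fst r) * bcoef \<xi> (snd s) (snd r) * U s * W r else 0))"
proof -
  have "tmul n \<xi> U W t = (\<Sum>s\<in>A. \<Sum>r\<in>supp W.
      (if (bidx n (fst s) (fst r), bidx n (snd s) (snd r)) = t
       then bcoef \<xi> (fst s) (fst r) * bcoef \<xi> (snd s) (snd r) * U s * W r else 0))"
    unfolding tmul_def by (rule sum_supp_sup[OF assms(1,2)]) (intro sum.neutral ballI, simp)
  then show ?thesis
    by (simp only:) (intro sum.cong refl sum_supp_sup[OF assms(3,4)], simp)
qed

lemma hmul_alt:
  assumes "finite A" "supp a \<subseteq> A" "finite B" "supp b \<subseteq> B"
  shows "hmul n \<xi> a b t = (\<Sum>p\<in>A. \<Sum>q\<in>B.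
      (if bidx n p q = t then bcoef \<xi> p q * a p * b q else 0))"
proof -
  have "hmul n \<xi> a b t = (\<Sum>p\<in>A. \<Sum>q\<in>supp b.
      (if bidx n p q = t then bcoef \<xi> p q * a p * b q else 0))"
    unfolding hmul_def by (rule sum_supp_sup[OF assms(1,2)]) (intro sum.neutral ballI, simp)
  then show ?thesis
    by (simp only:) (intro sum.cong refl sum_supp_sup[OF assms(3,4)], simp)
qed

lemma tmul_single:
  "tmul n \<xi> (single s a) (single r c) =
    single (bidx n (fst s) (fst r), bidx n (snd s) (snd r)) (bcoef \<xi> (fst s) (fst r) * bcoef \<xi> (snd s) (snd r) * a * c)"
  by (rule ext, subst tmul_alt[of "{s}" _ "{r}"]) (auto simp: supp_def single_def)

lemma tpow_g: "0 < n \<Longrightarrow> tpow n \<xi> (Delta_g n) j = single ((j mod n, 0), (j mod n, 0)) (1::'k::field)"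
proof (induction j)
  case 0 then show ?case by simp
next
  case (Suc j)
  have "((j mod n + 1 mod n) mod n) = Suc j mod n" by (metis mod_add_eq Suc_eq_plus1)
  then show ?case using Suc by (simp add: Delta_g_def tmul_single bidx_def bcoef_def)
qed

definition Dx :: "nat \<Rightarrow> nat \<Rightarrow> 'k::field \<Rightarrow> nat \<Rightarrow> ((nat \<times> nat) \<times> (nat \<times> nat) \<Rightarrow> 'k)" where
  "Dx n v q l = (\<lambda>((a,b),(c,d)). if a = 0 \<and> c = (v*b) mod n \<and> b + d = l then qb q l b else 0)"


lemma pow_mod_n: "(\<xi>::'k::field) ^ n = 1 \<Longrightarrow> \<xi> ^ (k mod n) = \<xi> ^ k"
proof -
  assume "\<xi> ^ n = 1"
  have "\<xi> ^ k = \<xi> ^ (n * (k div n) + k mod n)" by (simp only: mult_div_mod_eq)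
  also have "\<dots> = (\<xi> ^ n) ^ (k div n) * \<xi> ^ (k mod n)" by (simp only: power_add power_mult)
  also have "\<dots> = \<xi> ^ (k mod n)" using \<open>\<xi> ^ n = 1\<close> by simp
  finally show ?thesis by (rule sym)
qed

lemma sum_delta_cond:
  "finite S \<Longrightarrow> (\<Sum>b\<in>S. if b = B \<and> P then \<alpha> b else 0) = (if B \<in> S \<and> P then \<alpha> B else (0::'k::comm_monoid_add))"
  by (cases P) (simp_all add: sum.delta)

lemma sum_two: "x \<noteq> y \<Longrightarrow> (\<Sum>r\<in>{x,y}. h r) = h x + (h y::'k::comm_monoid_add)"
  by simp

lemma supp_Dx: "supp (Dx n v q l) \<subseteq> (\<lambda>b. ((0,b),((v*b) mod n, l-b))) ` {..l}"
  by (auto simp: supp_def Dx_def split: if_splits)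

lemma tx_e1: fixes \<xi> :: "'k::field" assumes n: "0 < n" and b: "b \<le> l"
  shows "(if (bidx n (0, b) (0, 0), bidx n ((v*b) mod n, l - b) (0, 1)) = ((a, B), c, d)
          then bcoef \<xi> (0, b) (0, 0) * bcoef \<xi> ((v*b) mod n, l - b) (0, 1) * Dx n v (\<xi> ^ v) l ((0, b), (v*b) mod n, l - b) *
               Delta_x n v ((0, 0), 0, 1) else 0)
        = (if b = B \<and> (a = 0 \<and> c = (v*B) mod n \<and> B + d = Suc l) then qb (\<xi>^v) l b else 0)"
proof -
  have 1: "bidx n (0, b) (0, 0) = (0, b)" "bidx n ((v*b) mod n, l - b) (0, 1) = ((v*b) mod n, Suc (l - b))"
    using n by (simp_all add: bidx_def)
  have 2: "bcoef \<xi> (0, b) (0, 0) = 1" "bcoef \<xi> ((v*b) mod n, l - b) (0, 1) = 1" by (simp_all add: bcoef_def)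
  have 3: "Dx n v (\<xi> ^ v) l ((0, b), (v*b) mod n, l - b) = qb (\<xi>^v) l b" using b by (simp add: Dx_def)
  have 4: "Delta_x n v ((0, 0), 0, 1) = (1::'k)" by (simp add: Delta_x_def single_def)
  have 5: "(((0::nat, b), ((v*b) mod n, Suc (l - b))) = ((a, B), c, d)) = (b = B \<and> (a = 0 \<and> c = (v*B) mod n \<and> B + d = Suc l))"
    using b by auto
  show ?thesis unfolding 1 2 3 4 5 by simp
qed

lemma tx_e2: fixes \<xi> :: "'k::field" assumes n: "0 < n" and b: "b \<le> l" and xi: "\<xi> ^ n = 1"
  shows "(if (bidx n (0, b) (0, 1), bidx n ((v*b) mod n, l - b) (v mod n, 0)) = ((a, B), c, d)
          then bcoef \<xi> (0, b) (0, 1) * bcoef \<xi> ((v*b) mod n, l - b) (v mod n, 0) * Dx n v (\<xi> ^ v) l ((0, b), (v*b) mod n, l - b) *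
               Delta_x n v ((0, 1), v mod n, 0) else 0)
        = (if b = B - 1 \<and> (1 \<le> B \<and> a = 0 \<and> c = (v*B) mod n \<and> B + d = Suc l) then (\<xi>^v)^(l-(B-1)) * qb (\<xi>^v) l b else 0)"
proof -
  have m1: "((v * b) mod n + v mod n) mod n = (v * Suc b) mod n"
  proof -
    have "((v * b) mod n + v mod n) mod n = (v * b + v) mod n" by (rule mod_add_eq)
    also have "v * b + v = v * Suc b" by simp
    finally show ?thesis .
  qed
  have p: "\<xi> ^ ((l - b) * (v mod n)) = (\<xi>^v)^(l-b)"
    by (metis pow_mod_n[OF xi] power_mult mult.commute)
  have 1: "bidx n (0, b) (0, 1) = (0, Suc b)" "bidx n ((v*b) mod n, l - b) (v mod n, 0) = ((v * Suc b) mod n, l - b)"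
    using n m1 by (simp_all add: bidx_def)
  have 2: "bcoef \<xi> (0, b) (0, 1) = 1" "bcoef \<xi> ((v*b) mod n, l - b) (v mod n, 0) = (\<xi>^v)^(l-b)"
    using p by (simp_all add: bcoef_def)
  have 3: "Dx n v (\<xi> ^ v) l ((0, b), (v*b) mod n, l - b) = qb (\<xi>^v) l b" using b by (simp add: Dx_def)
  have 4: "Delta_x n v ((0, 1), v mod n, 0) = (1::'k)" by (simp add: Delta_x_def single_def)
  have 5: "(((0::nat, Suc b), ((v * Suc b) mod n, l - b)) = ((a, B), c, d)) = (b = B - 1 \<and> (1 \<le> B \<and> a = 0 \<and> c = (v*B) mod n \<and> B + d = Suc l))"
    using b by (cases B) auto
  have 6: "b = B - 1 \<and> 1 \<le> B \<Longrightarrow> l - (B - 1) = l - b" by simp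
  show ?thesis unfolding 1 2 3 4 5 using 6 by auto
qed

lemma tpow_x:
  fixes \<xi> :: "'k::field"
  assumes n: "0 < n" and xi: "\<xi> ^ n = 1"
  shows "tpow n \<xi> (Delta_x n v) l = Dx n v (\<xi>^v) l"
proof (induction l)
  case 0
  show ?case by (rule ext, clarify, simp add: Dx_def single_def)
next
  case (Suc l)
  let ?A = "(\<lambda>b. ((0::nat,b),((v*b) mod n, l-b))) ` {..l}"
  let ?B = "{((0::nat,0::nat),(0::nat,1::nat)), ((0,1),(v mod n,0))}"
  have inj: "inj_on (\<lambda>b. ((0::nat,b),((v*b) mod n, l-b))) {..l}" by (auto simp: inj_on_def)
  have sB: "supp (Delta_x n v :: _ \<Rightarrow> 'k) \<subseteq> ?B"
    by (auto simp: supp_def Delta_x_def single_def split: if_splits)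
  show ?case
  proof (rule ext, clarify)
    fix a B c d
    have e1: "\<And>b. b \<in> {..l} \<Longrightarrow> (if (bidx n (0, b) (0, 0), bidx n ((v*b) mod n, l - b) (0, 1)) = ((a, B), c, d)
          then bcoef \<xi> (0, b) (0, 0) * bcoef \<xi> ((v*b) mod n, l - b) (0, 1) * Dx n v (\<xi> ^ v) l ((0, b), (v*b) mod n, l - b) *
               Delta_x n v ((0, 0), 0, 1) else 0)
        = (if b = B \<and> (a = 0 \<and> c = (v*B) mod n \<and> B + d = Suc l) then qb (\<xi>^v) l b else 0)"
      by (rule tx_e1[OF n]) simp
    have e2: "\<And>b. b \<in> {..l} \<Longrightarrow> (if (bidx n (0, b) (0, 1), bidx n ((v*b) mod n, l - b) (v mod n, 0)) = ((a, B), c, d)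
          then bcoef \<xi> (0, b) (0, 1) * bcoef \<xi> ((v*b) mod n, l - b) (v mod n, 0) * Dx n v (\<xi> ^ v) l ((0, b), (v*b) mod n, l - b) *
               Delta_x n v ((0, 1), v mod n, 0) else 0)
        = (if b = B - 1 \<and> (1 \<le> B \<and> a = 0 \<and> c = (v*B) mod n \<and> B + d = Suc l) then (\<xi>^v)^(l-(B-1)) * qb (\<xi>^v) l b else 0)"
      by (rule tx_e2[OF n _ xi]) simp
    have "tmul n \<xi> (tpow n \<xi> (Delta_x n v) l) (Delta_x n v) ((a, B), c, d)
       = (\<Sum>s\<in>?A. \<Sum>r\<in>?B.
      (if (bidx n (fst s) (fst r), bidx n (snd s) (snd r)) = ((a, B), c, d)
       then bcoef \<xi> (fst s) (fst r) * bcoef \<xi> (snd s) (snd r) * Dx n v (\<xi>^v) l s * Delta_x n v r else 0))"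
      unfolding Suc.IH by (rule tmul_alt[OF _ supp_Dx _ sB]) auto
    also have "\<dots> = (\<Sum>b\<in>{..l}. (if b = B \<and> (a = 0 \<and> c = (v*B) mod n \<and> B + d = Suc l) then qb (\<xi>^v) l b else 0)
       + (if b = B - 1 \<and> (1 \<le> B \<and> a = 0 \<and> c = (v*B) mod n \<and> B + d = Suc l) then (\<xi>^v)^(l-(B-1)) * qb (\<xi>^v) l b else 0))"
      apply (subst sum.reindex[OF inj])
      apply (simp only: o_def)
      apply (rule sum.cong[OF refl])
      apply (subst sum_two)
       apply simp
      apply (simp only: fst_conv snd_conv)
      using e1 e2 by presburger
    also have "\<dots> = Dx n v (\<xi> ^ v) (Suc l) ((a, B), c, d)"
      apply (simp only: sum.distrib sum_delta_cond finite_atMost)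
      apply (cases B)
       apply (auto simp: Dx_def qb_gt)
      done
    finally show "tpow n \<xi> (Delta_x n v) (Suc l) ((a, B), c, d) = Dx n v (\<xi> ^ v) (Suc l) ((a, B), c, d)"
      by simp
  qed
qed

lemma sum_sing: "(\<Sum>x\<in>{a}. g x) = (g a::'k::comm_monoid_add)"
  by simp

lemma Delta_eq:
  fixes \<xi> :: "'k::field"
  assumes n: "0 < n" and xi: "\<xi> ^ n = 1" and j: "j < n"
  shows "Delta n v \<xi> (j,l) = (\<lambda>t. \<Sum>b\<in>{..l}. if t = ((j,b),((j+v*b) mod n, l-b)) then qb (\<xi>^v) l b else 0)"
proof
  fix t
  have inj: "inj_on (\<lambda>b. ((0::nat,b),((v*b) mod n, l-b))) {..l}" by (auto simp: inj_on_def)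
  have "Delta n v \<xi> (j,l) t = tmul n \<xi> (single ((j, 0), (j, 0)) 1) (Dx n v (\<xi>^v) l) t"
    unfolding Delta_def using n xi j by (simp add: tpow_g tpow_x)
  also have "\<dots> = (\<Sum>s\<in>{((j, 0), (j, 0))}. \<Sum>r\<in>(\<lambda>b. ((0,b),((v*b) mod n, l-b))) ` {..l}.
      (if (bidx n (fst s) (fst r), bidx n (snd s) (snd r)) = t
       then bcoef \<xi> (fst s) (fst r) * bcoef \<xi> (snd s) (snd r) * single ((j, 0), (j, 0)) 1 s * Dx n v (\<xi>^v) l r else 0))"
    by (rule tmul_alt[OF _ supp_single_sub _ supp_Dx]) auto
  also have "\<dots> = (\<Sum>b\<in>{..l}. if t = ((j,b),((j+v*b) mod n, l-b)) then qb (\<xi>^v) l b else 0)"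
    apply (simp only: sum.reindex[OF inj] sum_sing o_def fst_conv snd_conv)
    apply (rule sum.cong[OF refl])
    using j by (auto simp: bidx_def bcoef_def single_def Dx_def mod_add_right_eq)
  finally show "Delta n v \<xi> (j,l) t = (\<Sum>b\<in>{..l}. if t = ((j,b),((j+v*b) mod n, l-b)) then qb (\<xi>^v) l b else 0)" .
qed

lemma conv_eq:
  fixes \<xi> :: "'k::field"
  assumes n: "0 < n" and xi: "\<xi> ^ n = 1" and j: "j < n"
  shows "conv n v \<xi> f h (j,l) = (\<Sum>b\<in>{..l}. qb (\<xi>^v) l b * f (j,b) * h ((j+v*b) mod n, l-b))"
proof -
  let ?phi = "\<lambda>b. ((j,b),((j+v*b) mod n, l-b))"
  have inj: "inj_on ?phi {..l}" by (auto simp: inj_on_def)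
  have D: "Delta n v \<xi> (j,l) (?phi b) = qb (\<xi>^v) l b" if "b \<le> l" for b
  proof -
    have "Delta n v \<xi> (j,l) (?phi b) = (\<Sum>b'\<in>{..l}. if b' = b then qb (\<xi>^v) l b' else 0)"
      unfolding Delta_eq[OF n xi j] by (rule sum.cong) auto
    then show ?thesis using that by simp
  qed
  have sup: "supp (Delta n v \<xi> (j,l)) \<subseteq> ?phi ` {..l}"
    unfolding Delta_eq[OF n xi j] supp_def by (auto elim!: sum.not_neutral_contains_not_neutral split: if_splits)
  have "conv n v \<xi> f h (j,l) = (\<Sum>s\<in>?phi ` {..l}. Delta n v \<xi> (j,l) s * f (fst s) * h (snd s))"
    unfolding conv_def using j by (simp add: sum_supp_sup[OF _ sup])
  also have "\<dots> = (\<Sum>b\<in>{..l}. qb (\<xi>^v) l b * f (j,b) * h ((j+v*b) mod n, l-b))"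
    by (simp add: sum.reindex[OF inj] D)
  finally show ?thesis .
qed

definition qsum :: "'k::field \<Rightarrow> nat \<Rightarrow> 'k" where
  "qsum q k = (\<Sum>i<k. q ^ i)"

lemma qsum_Suc2: "qsum q (Suc k) = qsum q k + q ^ k"
  unfolding qsum_def by simp

lemma qsum_Suc: "qsum q (Suc k) = 1 + q * qsum q k"
proof (induction k)
  case 0 then show ?case by (simp add: qsum_def)
next
  case (Suc k)
  have "qsum q (Suc (Suc k)) = 1 + q * qsum q k + q ^ Suc k"
    using Suc by (simp only: qsum_Suc2[of q "Suc k"])
  also have "\<dots> = 1 + q * qsum q (Suc k)" by (simp add: qsum_Suc2 distrib_left)
  finally show ?case .
qed

lemma qsum_mul: "(1 - q) * qsum q k = 1 - q ^ k"
proof (induction k)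
  case 0 then show ?case by (simp add: qsum_def)
next
  case (Suc k)
  have "(1 - q) * qsum q (Suc k) = (1 - q) * qsum q k + (1 - q) * q ^ k"
    by (simp add: qsum_Suc2 distrib_left)
  also have "\<dots> = 1 - q ^ Suc k" using Suc by (simp add: algebra_simps)
  finally show ?case .
qed

lemma ring_aux1: "(s::'k::field) * X + p * (s * Y) + Q * (X + p * Y) = (s + Q) * (X + p * Y)"
  by (simp add: algebra_simps)

lemma qb_absorb: "qsum q (Suc b) * qb q (Suc l) (Suc b) = qsum q (Suc l) * qb q l b"
proof (induction l arbitrary: b)
  case 0
  then show ?case by (cases b) (simp_all add: qsum_def)
next
  case (Suc l)
  show ?case
  proof (cases b)
    case 0
    have "qsum q (Suc 0) * qb q (Suc (Suc l)) (Suc 0) = qsum q (Suc l) * qb q l 0 + q ^ Suc l"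
      using Suc.IH[of 0] by (simp add: qsum_def)
    then show ?thesis using 0 by (simp add: qsum_Suc2)
  next
    case (Suc b')
    show ?thesis
    proof (cases "b' \<le> l")
      case True
      have e: "q ^ (l - b') * q ^ Suc b' = q ^ Suc l" using True
        by (metis Suc_diff_le diff_Suc_Suc power_add le_add_diff_inverse2 add_Suc_right)
      have IH1: "qsum q (Suc b) * qb q (Suc l) (Suc b) = qsum q (Suc l) * qb q l b" by (rule Suc.IH)
      have IH2: "qsum q (Suc b') * qb q (Suc l) (Suc b') = qsum q (Suc l) * qb q l b'" by (rule Suc.IH)
      have r1: "qb q (Suc (Suc l)) (Suc b) = qb q (Suc l) (Suc b) + q ^ (l - b') * qb q (Suc l) b"
        using Suc by simp
      have r2: "qb q (Suc l) b = qb q l b + q ^ (l - b') * qb q l b'" using Suc by simp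
      have "qsum q (Suc b) * qb q (Suc (Suc l)) (Suc b)
          = qsum q (Suc b) * qb q (Suc l) (Suc b) + q ^ (l - b') * (qsum q (Suc b) * qb q (Suc l) b)"
        unfolding r1 by (simp only: distrib_left mult.left_commute)
      also have "\<dots> = qsum q (Suc l) * qb q l b + q ^ (l - b') * ((qsum q b + q ^ b) * qb q (Suc l) b)"
        unfolding IH1 unfolding qsum_Suc2[of q b] ..
      also have "\<dots> = qsum q (Suc l) * qb q l b + q ^ (l - b') * (qsum q b * qb q (Suc l) b) + q ^ (l - b') * (q ^ b * qb q (Suc l) b)"
        by (simp only: distrib_right distrib_left add.assoc)
      also have "qsum q b * qb q (Suc l) b = qsum q (Suc l) * qb q l b'" using IH2 Suc by simp
      also have "q ^ (l - b') * (q ^ b * qb q (Suc l) b) = q ^ Suc l * qb q (Suc l) b"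
        using e Suc by (simp add: mult.assoc[symmetric])
      also have "qsum q (Suc l) * qb q l b + q ^ (l - b') * (qsum q (Suc l) * qb q l b') + q ^ Suc l * qb q (Suc l) b
          = qsum q (Suc (Suc l)) * qb q (Suc l) b"
        unfolding r2 qsum_Suc2[of q "Suc l"] by (rule ring_aux1)
      finally show ?thesis .
    next
      case False
      then show ?thesis using Suc by (simp add: qb_gt)
    qed
  qed
qed

lemma qb_exp: "q ^ m = 1 \<Longrightarrow> q ^ (l + m - b) * qb q l b = q ^ (l - b) * qb q l b"
proof (cases "b \<le> l")
  case True
  assume "q ^ m = 1"
  have "l + m - b = (l - b) + m" using True by simp
  then show ?thesis using \<open>q ^ m = 1\<close> by (simp add: power_add)
qed (simp add: qb_gt)

lemma qb_m:
  assumes qm: "q ^ m = 1" and prim: "\<forall>k. 0 < k \<and> k < m \<longrightarrow> q ^ k \<noteq> 1" and m: "1 \<le> m"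
  shows "qb q m b = (if b = 0 \<or> b = m then 1 else 0)"
proof -
  consider "b = 0" | "b = m" | "m < b" | "0 < b \<and> b < m" by linarith
  then show ?thesis
  proof cases
    case 4
    then have q1: "q \<noteq> 1" using prim m by (metis less_one not_less_eq power_one)
    have "(1 - q) * qsum q m = 0" using qm by (simp add: qsum_mul)
    then have s0: "qsum q m = 0" using q1 by simp
    have "(1 - q) * qsum q b \<noteq> 0" using prim 4 by (simp add: qsum_mul)
    then have sb: "qsum q b \<noteq> 0" by auto
    obtain b' where b': "b = Suc b'" using 4 by (cases b) auto
    obtain m' where m': "m = Suc m'" using m by (cases m) auto
    have "qsum q b * qb q m b = qsum q m * qb q m' b'"
      using qb_absorb[of q b' m'] b' m' by simp
    then show ?thesis using s0 sb 4 by simp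
  qed (auto simp: qb_gt)
qed

lemma qb_shift:
  assumes qm: "q ^ m = 1" and m1: "qb q m = (\<lambda>b. if b = 0 \<or> b = m then 1 else 0)" and m: "1 \<le> m"
  shows "qb q (l + m) b = qb q l b + (if m \<le> b then qb q l (b - m) else 0)"
proof (induction l arbitrary: b)
  case 0
  then show ?case using m1 m by (auto simp: qb_gt)
next
  case (Suc l)
  show ?case
  proof (cases b)
    case 0 then show ?thesis using m by simp
  next
    case (Suc b')
    have L: "qb q (Suc l + m) b = qb q (l + m) (Suc b') + q ^ (l + m - b') * qb q (l + m) b'"
      using Suc by simp
    have ex: "q ^ (l + m - b') * qb q l b' = q ^ (l - b') * qb q l b'" by (rule qb_exp[OF qm])
    have I1: "qb q (l + m) (Suc b') = qb q l (Suc b') + (if m \<le> Suc b' then qb q l (Suc b' - m) else 0)"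
      by (rule Suc.IH)
    have I2: "qb q (l + m) b' = qb q l b' + (if m \<le> b' then qb q l (b' - m) else 0)"
      by (rule Suc.IH)
    have R: "qb q (Suc l) (Suc b') = qb q l (Suc b') + q ^ (l - b') * qb q l b'" by simp
    consider "m \<le> b'" | "Suc b' = m" | "Suc b' < m" by linarith
    then show ?thesis
    proof cases
      case 1
      have ex2: "q ^ (l + m - b') = q ^ (l - (b' - m))" using 1 by (simp add: algebra_simps)
      have bb: "Suc b' - m = Suc (b' - m)" using 1 by simp
      have R2: "qb q (Suc l) (Suc (b' - m)) = qb q l (Suc (b' - m)) + q ^ (l - (b' - m)) * qb q l (b' - m)" by simp
      have "qb q (Suc l + m) b = qb q l (Suc b') + qb q l (Suc (b' - m)) + (q ^ (l + m - b') * qb q l b' + q ^ (l + m - b') * qb q l (b' - m))"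
        unfolding L I1 I2 using 1 bb by (simp add: algebra_simps)
      also have "\<dots> = qb q l (Suc b') + qb q l (Suc (b' - m)) + (q ^ (l - b') * qb q l b' + q ^ (l - (b' - m)) * qb q l (b' - m))"
        unfolding ex by (simp only: ex2)
      also have "\<dots> = qb q (Suc l) b + (if m \<le> b then qb q (Suc l) (b - m) else 0)"
        unfolding Suc R bb R2 using 1 by simp
      finally show ?thesis .
    next
      case 2
      have "qb q (Suc l + m) b = qb q l (Suc b') + 1 + q ^ (l + m - b') * qb q l b'"
        unfolding L I1 I2 using 2 by simp
      also have "\<dots> = qb q l (Suc b') + 1 + q ^ (l - b') * qb q l b'" unfolding ex ..
      also have "\<dots> = qb q (Suc l) b + (if m \<le> b then qb q (Suc l) (b - m) else 0)"
        unfolding Suc R using 2 by simp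
      finally show ?thesis .
    next
      case 3
      have "qb q (Suc l + m) b = qb q l (Suc b') + q ^ (l + m - b') * qb q l b'"
        unfolding L I1 I2 using 3 by simp
      also have "\<dots> = qb q l (Suc b') + q ^ (l - b') * qb q l b'" unfolding ex ..
      also have "\<dots> = qb q (Suc l) b + (if m \<le> b then qb q (Suc l) (b - m) else 0)"
        unfolding Suc R using 3 by simp
      finally show ?thesis .
    qed
  qed
qed

lemma qb_mult:
  assumes qm: "q ^ m = 1" and m1: "qb q m = (\<lambda>b. if b = 0 \<or> b = m then 1 else 0)" and m: "1 \<le> m"
  shows "qb q (m * a + m) (m * a) = of_nat (Suc a)"
proof (induction a)
  case 0 then show ?case by simp
next
  case (Suc a)
  have "qb q (m * Suc a + m) (m * Suc a) = qb q (m * Suc a) (m * Suc a) + qb q (m * Suc a) (m * a)"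
    using qb_shift[OF qm m1 m, of "m * Suc a" "m * Suc a"] m by simp
  also have "qb q (m * Suc a) (m * a) = of_nat (Suc a)" using Suc by (simp add: algebra_simps)
  finally show ?case by simp
qed

lemma qb_sub1: "qb q (Suc l) l = qsum q (Suc l)"
proof (induction l)
  case 0 then show ?case by (simp add: qsum_def)
next
  case (Suc l)
  then show ?case by (simp add: qsum_Suc)
qed

definition pstep :: "nat \<Rightarrow> 'k::field poly \<Rightarrow> (nat \<Rightarrow> 'k) \<Rightarrow> nat \<Rightarrow> 'k" where
  "pstep d P s l = (\<Sum>k\<le>degree P. coeff P k * s (l + d * k))"

lemma pstep_alt: "degree P < N \<Longrightarrow> pstep d P s l = (\<Sum>k<N. coeff P k * s (l + d * k))"
  unfolding pstep_def
  by (rule sum.mono_neutral_left) (auto simp: coeff_eq_0)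

lemma pstep_pCons: "pstep d (pCons a P) s l = a * s l + pstep d P s (l + d)"
proof -
  let ?N = "Suc (degree P)"
  have "pstep d (pCons a P) s l = (\<Sum>k<Suc ?N. coeff (pCons a P) k * s (l + d * k))"
    by (rule pstep_alt) (simp add: degree_pCons_le le_imp_less_Suc)
  also have "\<dots> = a * s l + (\<Sum>k<?N. coeff P k * s (l + d + d * k))"
    by (simp add: sum.lessThan_Suc_shift algebra_simps del: sum.lessThan_Suc)
  also have "(\<Sum>k<?N. coeff P k * s (l + d + d * k)) = pstep d P s (l + d)"
    by (rule pstep_alt[symmetric]) simp
  finally show ?thesis .
qed

lemma pstep_0 [simp]: "pstep d 0 s l = 0"
  by (simp add: pstep_def)

lemma pstep_add_poly: "pstep d (P + Q) s l = pstep d P s l + pstep d Q s l"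
proof -
  let ?N = "Suc (max (degree P) (degree Q))"
  have a: "degree (P + Q) < ?N" using degree_add_le_max[of P Q] by simp
  show ?thesis
    by (simp add: pstep_alt[OF a] pstep_alt[of P ?N] pstep_alt[of Q ?N] sum.distrib distrib_right)
qed

lemma pstep_smult: "pstep d (smult c P) s l = c * pstep d P s l"
proof -
  have a: "degree (smult c P) < Suc (degree P)" by (simp add: le_imp_less_Suc)
  show ?thesis by (simp add: pstep_alt[OF a] pstep_alt[of P "Suc (degree P)"] sum_distrib_left mult.assoc del: sum.lessThan_Suc)
qed

lemma pstep_mult: "pstep d (P * Q) s = pstep d P (pstep d Q s)"
proof (induction P rule: pCons_induct)
  case 0 then show ?case by (simp add: fun_eq_iff)
next
  case (pCons a P)
  show ?case
  proof
    fix l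
    have "pstep d (pCons a P * Q) s l = a * pstep d Q s l + pstep d (pCons 0 (P * Q)) s l"
      by (simp add: mult_pCons_left pstep_add_poly pstep_smult)
    also have "\<dots> = a * pstep d Q s l + pstep d P (pstep d Q s) (l + d)"
      by (simp add: pstep_pCons pCons.IH)
    also have "\<dots> = pstep d (pCons a P) (pstep d Q s) l" by (simp add: pstep_pCons)
    finally show "pstep d (pCons a P * Q) s l = pstep d (pCons a P) (pstep d Q s) l" .
  qed
qed

lemma pstep_add_seq: "pstep d P (\<lambda>l. s l + t l) l = pstep d P s l + pstep d P t l"
  by (simp add: pstep_def sum.distrib distrib_left)

lemma pstep_diff_seq: "pstep d P (\<lambda>l. s l - t l) l = pstep d P s l - pstep d P t l"
  by (simp add: pstep_def sum_subtractf right_diff_distrib)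

lemma pstep_smult_seq: "pstep d P (\<lambda>l. c * s l) l = c * pstep d P s l"
  by (simp add: pstep_def sum_distrib_left algebra_simps)

lemma pstep_zero_seq: "pstep d P (\<lambda>l. 0) l = 0"
  by (simp add: pstep_def)

lemma pstep_const: "pstep d [:a:] s l = a * s l"
  by (simp add: pstep_def)

lemma pstep_monom1: "pstep d (monom 1 g) s l = s (l + d * g)"
proof -
  have a: "degree (monom (1::'a::field) g) < Suc g" by (simp add: degree_monom_eq)
  have "pstep d (monom 1 g) s l = (\<Sum>k<Suc g. (if g = k then 1 else 0) * s (l + d * k))"
    by (simp add: pstep_alt[OF a] coeff_monom)
  also have "\<dots> = s (l + d * g)" by (simp add: if_distrib sum.delta cong: if_cong)
  finally show ?thesis .
qed

lemma pstep_pcomp: "pstep d (pcompose Q (monom 1 g)) s = pstep (d * g) Q s"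
proof (induction Q rule: pCons_induct)
  case 0 then show ?case by (simp add: fun_eq_iff)
next
  case (pCons a Q)
  show ?case
  proof
    fix l
    have "pstep d (pcompose (pCons a Q) (monom 1 g)) s l
        = a * s l + pstep d (monom 1 g * pcompose Q (monom 1 g)) s l"
      by (simp add: pcompose_pCons pstep_add_poly pstep_const)
    also have "\<dots> = a * s l + pstep (d * g) Q s (l + d * g)"
      by (simp add: pstep_mult pstep_monom1 pCons.IH)
    also have "\<dots> = pstep (d * g) (pCons a Q) s l" by (simp add: pstep_pCons)
    finally show "pstep d (pcompose (pCons a Q) (monom 1 g)) s l = pstep (d * g) (pCons a Q) s l" .
  qed
qed

lemma pstep_dvd:
  assumes "P dvd R" "\<And>l. pstep d P s l = 0"
  shows "pstep d R s l = 0"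
proof -
  obtain S where "R = P * S" using assms(1) by blast
  then have "R = S * P" by (simp add: mult.commute)
  moreover have "pstep d P s = (\<lambda>_. 0)" using assms(2) by (rule ext)
  ultimately show ?thesis by (simp add: pstep_mult pstep_zero_seq)
qed

lemma pstep_lin: "pstep d [:- \<mu>, 1:] s l = s (l + d) - \<mu> * s l"
  by (simp add: pstep_pCons pstep_const)

definition gseq :: "nat \<Rightarrow> 'k::field \<Rightarrow> nat \<Rightarrow> 'k" where
  "gseq t \<mu> a = of_nat (a choose t) * \<mu> ^ (a - t)"

lemma gseq0_step: "gseq 0 \<mu> (Suc a) = \<mu> * gseq 0 \<mu> a"
  by (simp add: gseq_def)

lemma gseq_step: "gseq (Suc t) \<mu> (Suc a) = \<mu> * gseq (Suc t) \<mu> a + gseq t \<mu> a"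
proof -
  consider "a < t" | "a = t" | "t < a" by linarith
  then show ?thesis
  proof cases
    case 1 then show ?thesis by (simp add: gseq_def binomial_eq_0)
  next
    case 2 then show ?thesis by (simp add: gseq_def binomial_eq_0)
  next
    case 3
    have e: "\<mu> * \<mu> ^ (a - Suc t) = \<mu> ^ (a - t)" using 3
      by (metis Suc_diff_Suc power_Suc)
    have "gseq (Suc t) \<mu> (Suc a) = of_nat (a choose Suc t) * \<mu> ^ (a - t) + of_nat (a choose t) * \<mu> ^ (a - t)"
      by (simp add: gseq_def algebra_simps)
    also have "\<dots> = \<mu> * gseq (Suc t) \<mu> a + gseq t \<mu> a"
      unfolding gseq_def by (simp add: e[symmetric] algebra_simps)
    finally show ?thesis .
  qed
qed

inductive_set Sol :: "(nat \<Rightarrow> 'k::field) set" where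
  g: "gseq t \<mu> \<in> Sol"
| z: "(\<lambda>_. 0) \<in> Sol"
| a: "s \<in> Sol \<Longrightarrow> t \<in> Sol \<Longrightarrow> (\<lambda>x. s x + t x) \<in> Sol"
| m: "s \<in> Sol \<Longrightarrow> (\<lambda>x. c * s x) \<in> Sol"

lemma Sol_diff: "s \<in> Sol \<Longrightarrow> t \<in> Sol \<Longrightarrow> (\<lambda>x. s x - t x) \<in> Sol"
  using Sol.a[of s "\<lambda>x. (-1) * t x"] Sol.m[of t "-1"] by simp

lemma antidiff_g: "\<exists>w\<in>Sol. \<forall>a. w (Suc a) - \<mu> * w a = gseq t \<nu> a"
proof (cases "\<nu> = \<mu>")
  case True
  show ?thesis
    by (rule bexI[of _ "gseq (Suc t) \<nu>"]) (auto simp: gseq_step True intro: Sol.g)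
next
  case False
  show ?thesis
  proof (induction t)
    case 0
    show ?case
    proof (rule bexI[of _ "\<lambda>a. (1 / (\<nu> - \<mu>)) * gseq 0 \<nu> a"])
      show "(\<lambda>a. (1 / (\<nu> - \<mu>)) * gseq 0 \<nu> a) \<in> Sol" by (rule Sol.m[OF Sol.g])
      show "\<forall>a. 1 / (\<nu> - \<mu>) * gseq 0 \<nu> (Suc a) - \<mu> * (1 / (\<nu> - \<mu>) * gseq 0 \<nu> a) = gseq 0 \<nu> a"
      proof
        fix a
        have "1 / (\<nu> - \<mu>) * gseq 0 \<nu> (Suc a) - \<mu> * (1 / (\<nu> - \<mu>) * gseq 0 \<nu> a)
            = (1 / (\<nu> - \<mu>)) * ((\<nu> - \<mu>) * gseq 0 \<nu> a)"
          by (simp add: gseq0_step algebra_simps)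
        also have "\<dots> = gseq 0 \<nu> a" using False by simp
        finally show "1 / (\<nu> - \<mu>) * gseq 0 \<nu> (Suc a) - \<mu> * (1 / (\<nu> - \<mu>) * gseq 0 \<nu> a) = gseq 0 \<nu> a" .
      qed
    qed
  next
    case (Suc t)
    then obtain w where w: "w \<in> Sol" "\<And>a. w (Suc a) - \<mu> * w a = gseq t \<nu> a" by blast
    show ?case
    proof (rule bexI[of _ "\<lambda>a. (1 / (\<nu> - \<mu>)) * (gseq (Suc t) \<nu> a - w a)"])
      show "(\<lambda>a. 1 / (\<nu> - \<mu>) * (gseq (Suc t) \<nu> a - w a)) \<in> Sol"
        by (intro Sol.m Sol_diff Sol.g w(1))
      show "\<forall>a. 1 / (\<nu> - \<mu>) * (gseq (Suc t) \<nu> (Suc a) - w (Suc a)) - \<mu> * (1 / (\<nu> - \<mu>) * (gseq (Suc t) \<nu> a - w a)) =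
        gseq (Suc t) \<nu> a"
      proof
        fix a
        have "w (Suc a) = gseq t \<nu> a + \<mu> * w a" using w(2)[of a] by (simp add: algebra_simps)
        then have "1 / (\<nu> - \<mu>) * (gseq (Suc t) \<nu> (Suc a) - w (Suc a)) - \<mu> * (1 / (\<nu> - \<mu>) * (gseq (Suc t) \<nu> a - w a))
           = (1 / (\<nu> - \<mu>)) * ((\<nu> - \<mu>) * gseq (Suc t) \<nu> a)"
          by (simp add: gseq_step algebra_simps)
        also have "\<dots> = gseq (Suc t) \<nu> a" using False by simp
        finally show "1 / (\<nu> - \<mu>) * (gseq (Suc t) \<nu> (Suc a) - w (Suc a)) - \<mu> * (1 / (\<nu> - \<mu>) * (gseq (Suc t) \<nu> a - w a)) =
          gseq (Suc t) \<nu> a" .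
      qed
    qed
  qed
qed

lemma antidiff: "u \<in> Sol \<Longrightarrow> \<exists>w\<in>Sol. \<forall>a. w (Suc a) - \<mu> * w a = u a"
proof (induction rule: Sol.induct)
  case (g t \<nu>) then show ?case by (rule antidiff_g)
next
  case z then show ?case by (rule bexI[of _ "\<lambda>_. 0"]) (auto intro: Sol.z)
next
  case (a s t)
  then obtain w1 w2 where "w1 \<in> Sol" "\<forall>a. w1 (Suc a) - \<mu> * w1 a = s a" "w2 \<in> Sol" "\<forall>a. w2 (Suc a) - \<mu> * w2 a = t a"
    by blast
  then show ?case by (intro bexI[of _ "\<lambda>x. w1 x + w2 x"]) (auto simp: algebra_simps intro: Sol.a)
next
  case (m s c)
  then obtain w1 where "w1 \<in> Sol" "\<forall>a. w1 (Suc a) - \<mu> * w1 a = s a" by blast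
  then show ?case by (intro bexI[of _ "\<lambda>x. c * w1 x"]) (auto simp: algebra_simps intro: Sol.m)
qed

lemma geom_Sol:
  assumes "\<And>a. e (Suc a) = \<mu> * e a"
  shows "e \<in> Sol"
proof -
  have "e = (\<lambda>a. e 0 * gseq 0 \<mu> a)"
  proof
    fix a show "e a = e 0 * gseq 0 \<mu> a"
      by (induction a) (simp_all add: gseq_def assms)
  qed
  then show ?thesis using Sol.m[OF Sol.g] by metis
qed

lemma rec_Sol:
  fixes P :: "'k::field poly"
  assumes ac: "alg_closed_field TYPE('k)"
  shows "P \<noteq> 0 \<Longrightarrow> (\<And>a. pstep 1 P s a = 0) \<Longrightarrow> s \<in> Sol"
proof (induction "degree P" arbitrary: P s rule: less_induct)
  case less
  show ?case
  proof (cases "degree P = 0")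
    case True
    then obtain c where P: "P = [:c:]" by (metis degree_eq_zeroE)
    then have c: "c \<noteq> 0" using less.prems by simp
    have "s = (\<lambda>_. 0)"
    proof
      fix a show "s a = 0" using less.prems(2)[of a] c by (simp add: P pstep_const)
    qed
    then show ?thesis by (simp add: Sol.z)
  next
    case False
    then obtain \<mu> where "poly P \<mu> = 0" using ac unfolding alg_closed_field_def by blast
    then obtain P' where P: "P = P' * [:-\<mu>, 1:]"
      by (metis dvd_def mult.commute poly_eq_0_iff_dvd)
    have P'0: "P' \<noteq> 0" using less.prems P by auto
    have dP: "degree P' < degree P" unfolding P by (subst degree_mult_eq) (use P'0 in auto)
    let ?s' = "\<lambda>a. s (a + 1) - \<mu> * s a"
    have e: "pstep 1 [:-\<mu>, 1:] s = ?s'" by (rule ext) (simp add: pstep_lin)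
    have "pstep 1 P' ?s' a = 0" for a
      using less.prems(2)[of a] unfolding P pstep_mult e .
    then have s': "?s' \<in> Sol" using less.hyps[OF dP P'0] by blast
    obtain w where w: "w \<in> Sol" "\<forall>a. w (Suc a) - \<mu> * w a = ?s' a" using antidiff[OF s'] by blast
    have "(\<lambda>a. s a - w a) \<in> Sol"
    proof (rule geom_Sol[where \<mu> = \<mu>])
      fix a
      have "w (Suc a) - \<mu> * w a = s (a + 1) - \<mu> * s a" using w(2) by blast
      then show "s (Suc a) - w (Suc a) = \<mu> * (s a - w a)" by (simp add: algebra_simps)
    qed
    then have "(\<lambda>x. (s x - w x) + w x) \<in> Sol" using w(1) by (rule Sol.a)
    then show ?thesis by simp
  qed
qed

lemma factor_pcomp:
  fixes P :: "'k::field poly"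
  assumes ac: "alg_closed_field TYPE('k)"
  shows "P \<noteq> 0 \<Longrightarrow> \<exists>Q. Q \<noteq> 0 \<and> P dvd pcompose Q (monom 1 g)"
proof (induction "degree P" arbitrary: P rule: less_induct)
  case less
  show ?case
  proof (cases "degree P = 0")
    case True
    then obtain c where P: "P = [:c:]" by (metis degree_eq_zeroE)
    then have c: "c \<noteq> 0" using less.prems by simp
    show ?thesis
      by (rule exI[of _ 1]) (simp add: P c const_poly_dvd_iff dvd_field_iff)
  next
    case False
    then obtain \<mu> where "poly P \<mu> = 0" using ac unfolding alg_closed_field_def by blast
    then obtain P' where P: "P = [:-\<mu>, 1:] * P'"
      by (metis dvd_def poly_eq_0_iff_dvd)
    have P'0: "P' \<noteq> 0" using less.prems P by auto
    have dP: "degree P' < degree P" unfolding P by (subst degree_mult_eq) (use P'0 in auto)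
    obtain Q' where Q': "Q' \<noteq> 0" "P' dvd pcompose Q' (monom 1 g)" using less.hyps[OF dP P'0] by blast
    have "poly (pcompose [:-(\<mu>^g), 1:] (monom 1 g)) \<mu> = 0"
      by (simp add: poly_pcompose poly_monom)
    then have d1: "[:-\<mu>, 1:] dvd pcompose [:-(\<mu>^g), 1:] (monom 1 g)"
      by (simp add: poly_eq_0_iff_dvd)
    show ?thesis
    proof (intro exI conjI)
      have "[:-(\<mu>^g), 1:] \<noteq> 0" by simp
      then show "[:-(\<mu>^g), 1:] * Q' \<noteq> 0" using Q'(1) by (metis mult_eq_0_iff)
      show "P dvd pcompose ([:-(\<mu>^g), 1:] * Q') (monom 1 g)"
        unfolding pcompose_mult P by (rule mult_dvd_mono[OF d1 Q'(2)])
    qed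
  qed
qed


locale TT =
  fixes n v :: nat and \<xi> :: "'k::field_char_0"
  assumes n1: "1 \<le> n" and vle: "v \<le> n - 1" and xin: "\<xi> ^ n = 1"
    and prim: "\<forall>k. 0 < k \<and> k < n \<longrightarrow> \<xi> ^ k \<noteq> 1"
begin

abbreviation "m \<equiv> n div gcd n v"
abbreviation "q \<equiv> \<xi> ^ v"

lemma n0: "0 < n" using n1 by simp

lemma gpos: "0 < gcd n v" using n0 by simp

lemma n_eq: "n = m * gcd n v" by simp

lemma m1: "1 \<le> m"
proof (rule ccontr)
  assume "\<not> 1 \<le> m"
  then have "m = 0" by simp
  then have "n = 0" using n_eq by (metis mult_0)
  then show False using n0 by simp
qed

lemma vm: "v * m = (v div gcd n v) * n"
  by (simp add: div_mult_swap dvd_div_mult)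

lemma vm_mod: "(v * m * k) mod n = 0"
  unfolding vm by simp

lemma jmod: "(j + v * (b + m)) mod n = (j + v * b) mod n"
proof -
  have "j + v * (b + m) = (j + v * b) + (v div gcd n v) * n" using vm by (simp add: algebra_simps)
  then show ?thesis by (simp only: mod_mult_self1)
qed

lemma xi_dvd: "\<xi> ^ k = 1 \<Longrightarrow> n dvd k"
proof -
  assume a: "\<xi> ^ k = 1"
  have "\<xi> ^ (k mod n) = 1" using a pow_mod_n[OF xin] by simp
  moreover have "k mod n < n" using n0 by simp
  ultimately have "k mod n = 0" using prim by (metis neq0_conv)
  then show ?thesis by (simp add: mod_eq_0_iff_dvd)
qed

lemma qm: "q ^ m = 1"
proof -
  have "q ^ m = \<xi> ^ ((v div gcd n v) * n)" by (simp add: power_mult[symmetric] vm)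
  also have "\<dots> = 1" by (simp add: power_mult mult.commute xin)
  finally show ?thesis .
qed

lemma q_dvd: "q ^ k = 1 \<Longrightarrow> m dvd k"
proof -
  assume "q ^ k = 1"
  then have "\<xi> ^ (v * k) = 1" by (simp add: power_mult)
  then have d: "n dvd v * k" by (rule xi_dvd)
  have cop: "coprime m (v div gcd n v)" using div_gcd_coprime[of n v] n0 by simp
  have vv: "(v div gcd n v) * gcd n v = v" by simp
  have "m * gcd n v dvd ((v div gcd n v) * k) * gcd n v"
    using d n_eq vv by (metis mult.assoc mult.commute)
  then have "m dvd (v div gcd n v) * k" using gpos by (metis dvd_times_right_cancel_iff less_not_refl)
  then show ?thesis using cop by (simp add: coprime_dvd_mult_right_iff)
qed

lemma q_prim: "\<forall>k. 0 < k \<and> k < m \<longrightarrow> q ^ k \<noteq> 1"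
  using q_dvd by (meson dvd_imp_le not_le)

lemma qbm: "qb q m = (\<lambda>b. if b = 0 \<or> b = m then 1 else 0)"
  using qb_m[OF qm q_prim m1] by (rule ext)

lemma qb_shift': "qb q (l + m) b = qb q l b + (if m \<le> b then qb q l (b - m) else 0)"
  by (rule qb_shift[OF qm qbm m1])

lemma qb_mult': "qb q (m * a + m) (m * a) = of_nat (Suc a)"
  by (rule qb_mult[OF qm qbm m1])

lemma conv_f: "j < n \<Longrightarrow> conv n v \<xi> f h (j,l) = (\<Sum>b\<in>{..l}. qb q l b * f (j,b) * h ((j+v*b) mod n, l-b))"
  by (rule conv_eq[OF n0 xin])

definition Tm :: "(nat \<times> nat \<Rightarrow> 'k) \<Rightarrow> (nat \<times> nat \<Rightarrow> 'k)" where
  "Tm f = (\<lambda>p. f (fst p, snd p + m))"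

definition Dop :: "'k \<Rightarrow> (nat \<times> nat \<Rightarrow> 'k) \<Rightarrow> (nat \<times> nat \<Rightarrow> 'k)" where
  "Dop \<mu> f = (\<lambda>p. Tm f p - \<mu> * f p)"

definition zeroJ :: "(nat \<times> nat \<Rightarrow> 'k) \<Rightarrow> bool" where
  "zeroJ f \<longleftrightarrow> (\<forall>j l. n \<le> j \<longrightarrow> f (j, l) = 0)"

definition Fam :: "nat \<Rightarrow> nat \<Rightarrow> (nat \<Rightarrow> 'k) \<Rightarrow> (nat \<times> nat \<Rightarrow> 'k)" where
  "Fam j r s = (\<lambda>p. if fst p = j \<and> fst p < n \<and> snd p mod m = r then s (snd p div m) else 0)"

definition VanM :: "'k poly \<Rightarrow> (nat \<times> nat \<Rightarrow> 'k) \<Rightarrow> bool" where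
  "VanM P f \<longleftrightarrow> (\<forall>j<n. \<forall>l. pstep m P (\<lambda>l. f (j, l)) l = 0)"

definition RD :: "(nat \<times> nat \<Rightarrow> 'k) set" where
  "RD = {f. zeroJ f \<and> (\<exists>P. P \<noteq> 0 \<and> VanM P f)}"

inductive_set Span :: "(nat \<times> nat \<Rightarrow> 'k) set" where
  b: "j < n \<Longrightarrow> r < m \<Longrightarrow> Fam j r (gseq t \<mu>) \<in> Span"
| z: "(\<lambda>_. 0) \<in> Span"
| a: "f \<in> Span \<Longrightarrow> h \<in> Span \<Longrightarrow> (\<lambda>p. f p + h p) \<in> Span"
| s: "f \<in> Span \<Longrightarrow> (\<lambda>p. c * f p) \<in> Span"

lemma Fam_Sol: "s \<in> Sol \<Longrightarrow> j < n \<Longrightarrow> r < m \<Longrightarrow> Fam j r s \<in> Span"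
proof (induction rule: Sol.induct)
  case (g t \<mu>) then show ?case by (rule Span.b)
next
  case z
  have "Fam j r (\<lambda>_. 0) = (\<lambda>_. 0)" by (simp add: Fam_def fun_eq_iff)
  then show ?case using Span.z by simp
next
  case (a s t)
  have "Fam j r (\<lambda>x. s x + t x) = (\<lambda>p. Fam j r s p + Fam j r t p)" by (simp add: Fam_def fun_eq_iff)
  then show ?case using Span.a a by simp
next
  case (m s c)
  have "Fam j r (\<lambda>x. c * s x) = (\<lambda>p. c * Fam j r s p)" by (simp add: Fam_def fun_eq_iff)
  then show ?case using Span.s m by simp
qed

lemma Span_sum: "finite S \<Longrightarrow> (\<forall>i\<in>S. F i \<in> Span) \<Longrightarrow> (\<lambda>p. \<Sum>i\<in>S. F i p) \<in> Span"
proof (induction S rule: finite_induct)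
  case empty then show ?case by (simp add: Span.z)
next
  case (insert x S)
  then show ?case using Span.a[of "F x" "\<lambda>p. \<Sum>i\<in>S. F i p"] by simp
qed

lemma Fam_at: "Fam j r s (J, l) = (if J = j \<and> J < n \<and> l mod m = r then s (l div m) else 0)"
  by (simp add: Fam_def)

lemma decomp:
  assumes "zeroJ f"
  shows "f = (\<lambda>p. \<Sum>j<n. \<Sum>r<m. Fam j r (\<lambda>a. f (j, m * a + r)) p)"
proof
  fix p :: "nat \<times> nat"
  obtain J l where p: "p = (J, l)" by (cases p)
  have lm: "l mod m < m" using m1 by simp
  have inner: "(\<Sum>r<m. Fam j r (\<lambda>a. f (j, m * a + r)) (J, l)) = (if j = J \<and> J < n then f (J, l) else 0)" for j
  proof -
    have "(\<Sum>r<m. Fam j r (\<lambda>a. f (j, m * a + r)) (J, l))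
        = (\<Sum>r<m. if r = l mod m \<and> (j = J \<and> J < n) then f (J, m * (l div m) + r) else 0)"
      by (rule sum.cong) (auto simp: Fam_at)
    also have "\<dots> = (if j = J \<and> J < n then f (J, m * (l div m) + l mod m) else 0)"
      by (simp only: sum_delta_cond finite_lessThan) (use lm in simp)
    finally show ?thesis by simp
  qed
  have "(\<Sum>j<n. \<Sum>r<m. Fam j r (\<lambda>a. f (j, m * a + r)) p) = (\<Sum>j<n. if j = J \<and> J < n then f (J, l) else 0)"
    unfolding p inner ..
  also have "\<dots> = (if J < n then f (J, l) else 0)"
    by (simp only: sum_delta_cond finite_lessThan) simp
  also have "\<dots> = f p" using assms by (simp add: p zeroJ_def)
  finally show "f p = (\<Sum>j<n. \<Sum>r<m. Fam j r (\<lambda>a. f (j, m * a + r)) p)" by simp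
qed

lemma pstep_block: "pstep 1 P (\<lambda>a. s (m * a + r)) a = pstep m P s (m * a + r)"
  unfolding pstep_def by (rule sum.cong) (simp_all add: algebra_simps)

lemma RD_Span:
  assumes ac: "alg_closed_field TYPE('k)" and f: "f \<in> RD"
  shows "f \<in> Span"
proof -
  obtain P where P: "P \<noteq> 0" "VanM P f" and z: "zeroJ f" using f by (auto simp: RD_def)
  have "\<forall>j\<in>{..<n}. (\<lambda>p. \<Sum>r<m. Fam j r (\<lambda>a. f (j, m * a + r)) p) \<in> Span"
  proof
    fix j assume j: "j \<in> {..<n}"
    show "(\<lambda>p. \<Sum>r<m. Fam j r (\<lambda>a. f (j, m * a + r)) p) \<in> Span"
    proof (rule Span_sum)
      show "\<forall>r\<in>{..<m}. Fam j r (\<lambda>a. f (j, m * a + r)) \<in> Span"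
      proof
        fix r assume r: "r \<in> {..<m}"
        have "(\<lambda>a. f (j, m * a + r)) \<in> Sol"
        proof (rule rec_Sol[OF ac P(1)])
          fix a
          show "pstep 1 P (\<lambda>a. f (j, m * a + r)) a = 0"
            using P(2) j unfolding VanM_def pstep_block[of P "\<lambda>l. f (j, l)"] by simp
        qed
        then show "Fam j r (\<lambda>a. f (j, m * a + r)) \<in> Span" using j r by (simp add: Fam_Sol)
      qed
    qed simp
  qed
  then have "(\<lambda>p. \<Sum>j<n. \<Sum>r<m. Fam j r (\<lambda>a. f (j, m * a + r)) p) \<in> Span"
    using Span_sum[of "{..<n}"] by simp
  then show ?thesis using decomp[OF z] by simp
qed

lemma conv_add_r: "conv n v \<xi> f (\<lambda>p. h1 p + h2 p) = (\<lambda>p. conv n v \<xi> f h1 p + conv n v \<xi> f h2 p)"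
  by (simp add: conv_def fun_eq_iff sum.distrib algebra_simps)

lemma conv_add_l: "conv n v \<xi> (\<lambda>p. h1 p + h2 p) f = (\<lambda>p. conv n v \<xi> h1 f p + conv n v \<xi> h2 f p)"
  by (simp add: conv_def fun_eq_iff sum.distrib algebra_simps)

lemma conv_diff_r: "conv n v \<xi> f (\<lambda>p. h1 p - h2 p) = (\<lambda>p. conv n v \<xi> f h1 p - conv n v \<xi> f h2 p)"
  by (simp add: conv_def fun_eq_iff sum_subtractf algebra_simps)

lemma conv_diff_l: "conv n v \<xi> (\<lambda>p. h1 p - h2 p) f = (\<lambda>p. conv n v \<xi> h1 f p - conv n v \<xi> h2 f p)"
  by (simp add: conv_def fun_eq_iff sum_subtractf algebra_simps)

lemma conv_smult_r: "conv n v \<xi> f (\<lambda>p. c * h p) = (\<lambda>p. c * conv n v \<xi> f h p)"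
  by (simp add: conv_def fun_eq_iff sum_distrib_left algebra_simps)

lemma conv_smult_l: "conv n v \<xi> (\<lambda>p. c * h p) f = (\<lambda>p. c * conv n v \<xi> h f p)"
  by (simp add: conv_def fun_eq_iff sum_distrib_left algebra_simps)

lemma conv_zero_r: "conv n v \<xi> f (\<lambda>_. 0) = (\<lambda>_. 0)"
  by (simp add: conv_def fun_eq_iff)

lemma conv_zero_l: "conv n v \<xi> (\<lambda>_. 0) f = (\<lambda>_. 0)"
  by (simp add: conv_def fun_eq_iff)

lemma conv_zeroJ: "zeroJ (conv n v \<xi> f h)"
  by (simp add: conv_def zeroJ_def)

lemma sum_shift_m:
  "(\<Sum>b\<in>{..l + m}. if m \<le> b then G (b - m) else 0) = (\<Sum>b\<in>{..l}. (G b :: 'k))"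
proof -
  have u: "{..l + m} = {..<m} \<union> (\<lambda>b. b + m) ` {..l}"
  proof (intro equalityI subsetI)
    fix x assume x: "x \<in> {..l + m}"
    show "x \<in> {..<m} \<union> (\<lambda>b. b + m) ` {..l}"
    proof (cases "x < m")
      case False
      then have "x = (x - m) + m" "x - m \<in> {..l}" using x by auto
      then show ?thesis by blast
    qed simp
  qed auto
  have d: "{..<m} \<inter> (\<lambda>b. b + m) ` {..l} = {}" by auto
  have "(\<Sum>b\<in>{..l + m}. if m \<le> b then G (b - m) else 0)
      = (\<Sum>b\<in>{..<m}. if m \<le> b then G (b - m) else 0) + (\<Sum>b\<in>(\<lambda>b. b + m) ` {..l}. if m \<le> b then G (b - m) else 0)"
    unfolding u by (rule sum.union_disjoint) (use d in auto)
  also have "\<dots> = (\<Sum>b\<in>{..l}. G b)"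
    by (simp add: sum.reindex inj_on_def)
  finally show ?thesis .
qed

lemma Tm_conv: "Tm (conv n v \<xi> f h) = (\<lambda>p. conv n v \<xi> f (Tm h) p + conv n v \<xi> (Tm f) h p)"
proof
  fix p :: "nat \<times> nat"
  obtain j l where p: "p = (j, l)" by (cases p)
  show "Tm (conv n v \<xi> f h) p = conv n v \<xi> f (Tm h) p + conv n v \<xi> (Tm f) h p"
  proof (cases "j < n")
    case False
    then show ?thesis by (simp add: p Tm_def conv_def)
  next
    case True
    have "Tm (conv n v \<xi> f h) p = (\<Sum>b\<in>{..l + m}. qb q (l + m) b * f (j,b) * h ((j+v*b) mod n, l + m - b))"
      by (simp add: p Tm_def conv_f[OF True])
    also have "\<dots> = (\<Sum>b\<in>{..l + m}. qb q l b * f (j,b) * h ((j+v*b) mod n, l + m - b))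
       + (\<Sum>b\<in>{..l + m}. if m \<le> b then qb q l (b - m) * f (j,(b - m) + m) * h ((j+v*((b - m) + m)) mod n, l - (b - m)) else 0)"
      unfolding sum.distrib[symmetric]
    proof (rule sum.cong[OF refl])
      fix b assume b: "b \<in> {..l + m}"
      show "qb q (l + m) b * f (j,b) * h ((j+v*b) mod n, l + m - b) =
        qb q l b * f (j,b) * h ((j+v*b) mod n, l + m - b) +
        (if m \<le> b then qb q l (b - m) * f (j,(b - m) + m) * h ((j+v*((b - m) + m)) mod n, l - (b - m)) else 0)"
      proof (cases "m \<le> b")
        case True
        have e: "l - (b - m) = l + m - b" using b True by simp
        show ?thesis unfolding qb_shift' using True by (simp add: e distrib_right)
      next
        case False
        then show ?thesis unfolding qb_shift' by simp
      qed
    qed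
    also have "(\<Sum>b\<in>{..l + m}. qb q l b * f (j,b) * h ((j+v*b) mod n, l + m - b))
        = (\<Sum>b\<in>{..l}. qb q l b * f (j,b) * h ((j+v*b) mod n, l + m - b))"
      by (rule sum.mono_neutral_right) (auto simp: qb_gt)
    also have "\<dots> = (\<Sum>b\<in>{..l}. qb q l b * f (j,b) * h ((j+v*b) mod n, l - b + m))"
      by (rule sum.cong) auto
    also have "\<dots> = conv n v \<xi> f (Tm h) p"
      by (simp add: p Tm_def conv_f[OF True])
    also have "(\<Sum>b\<in>{..l + m}. if m \<le> b then qb q l (b - m) * f (j,(b - m) + m) * h ((j+v*((b - m) + m)) mod n, l - (b - m)) else 0)
        = (\<Sum>b\<in>{..l}. qb q l b * f (j, b + m) * h ((j+v*(b + m)) mod n, l - b))"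
      by (rule sum_shift_m)
    also have "\<dots> = conv n v \<xi> (Tm f) h p"
      by (simp add: p Tm_def conv_f[OF True] jmod)
    finally show ?thesis .
  qed
qed

lemma Dop_conv: "Dop (\<mu>1 + \<mu>2) (conv n v \<xi> f h) = (\<lambda>p. conv n v \<xi> f (Dop \<mu>2 h) p + conv n v \<xi> (Dop \<mu>1 f) h p)"
  unfolding Dop_def Tm_conv conv_diff_r conv_diff_l conv_smult_r conv_smult_l
  by (simp add: fun_eq_iff algebra_simps)

lemma Dop_add: "Dop \<mu> (\<lambda>p. f p + h p) = (\<lambda>p. Dop \<mu> f p + Dop \<mu> h p)"
  by (simp add: Dop_def Tm_def fun_eq_iff algebra_simps)

lemma Dop_zero: "Dop \<mu> (\<lambda>_. 0) = (\<lambda>_. 0)"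
  by (simp add: Dop_def Tm_def fun_eq_iff)

lemma Diter_add: "(Dop \<mu> ^^ e) (\<lambda>p. f p + h p) = (\<lambda>p. (Dop \<mu> ^^ e) f p + (Dop \<mu> ^^ e) h p)"
  by (induction e) (simp_all add: Dop_add)

lemma Diter_zero: "(Dop \<mu> ^^ e) (\<lambda>_. 0) = (\<lambda>_. 0)"
  by (induction e) (simp_all add: Dop_zero)

lemma Leibniz:
  "(Dop \<mu>1 ^^ e1) f = (\<lambda>_. 0) \<Longrightarrow> (Dop \<mu>2 ^^ e2) h = (\<lambda>_. 0) \<Longrightarrow>
   (Dop (\<mu>1 + \<mu>2) ^^ (e1 + e2)) (conv n v \<xi> f h) = (\<lambda>_. 0)"
proof (induction "e1 + e2" arbitrary: e1 e2 f h)
  case 0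
  then have "f = (\<lambda>_. 0)" by simp
  then show ?case by (simp add: conv_zero_l Diter_zero)
next
  case (Suc N)
  show ?case
  proof (cases "e1 = 0 \<or> e2 = 0")
    case True
    then show ?thesis
    proof
      assume "e1 = 0"
      then have "f = (\<lambda>_. 0)" using Suc.prems by simp
      then show ?thesis by (simp add: conv_zero_l Diter_zero)
    next
      assume "e2 = 0"
      then have "h = (\<lambda>_. 0)" using Suc.prems by simp
      then show ?thesis by (simp add: conv_zero_r Diter_zero)
    qed
  next
    case False
    then obtain a1 a2 where e1: "e1 = Suc a1" and e2: "e2 = Suc a2" by (meson not0_implies_Suc)
    have h': "(Dop \<mu>2 ^^ a2) (Dop \<mu>2 h) = (\<lambda>_. 0)" using Suc.prems(2) e2 by (simp add: funpow_Suc_right del: funpow.simps)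
    have f': "(Dop \<mu>1 ^^ a1) (Dop \<mu>1 f) = (\<lambda>_. 0)" using Suc.prems(1) e1 by (simp add: funpow_Suc_right del: funpow.simps)
    have A: "(Dop (\<mu>1 + \<mu>2) ^^ (e1 + a2)) (conv n v \<xi> f (Dop \<mu>2 h)) = (\<lambda>_. 0)"
      by (rule Suc.hyps) (use Suc.hyps(2) e2 Suc.prems(1) h' in auto)
    have B: "(Dop (\<mu>1 + \<mu>2) ^^ (a1 + e2)) (conv n v \<xi> (Dop \<mu>1 f) h) = (\<lambda>_. 0)"
      by (rule Suc.hyps) (use Suc.hyps(2) e1 Suc.prems(2) f' in auto)
    have N1: "e1 + a2 = N" "a1 + e2 = N" using Suc.hyps(2) e1 e2 by auto
    have "(Dop (\<mu>1 + \<mu>2) ^^ (e1 + e2)) (conv n v \<xi> f h) = (Dop (\<mu>1 + \<mu>2) ^^ N) (Dop (\<mu>1 + \<mu>2) (conv n v \<xi> f h))"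
    proof -
      have "e1 + e2 = Suc N" using Suc.hyps(2) by simp
      then show ?thesis by (simp only: funpow_Suc_right o_apply)
    qed
    also have "\<dots> = (\<lambda>_. 0)" unfolding Dop_conv Diter_add using A B N1 by simp
    finally show ?thesis .
  qed
qed

lemma Tm_Fam: "Tm (Fam j r s) = Fam j r (\<lambda>a. s (Suc a))"
proof -
  have "(l + m) mod m = l mod m" "(l + m) div m = Suc (l div m)" for l using m1 by simp_all
  then show ?thesis unfolding Tm_def Fam_def by (simp add: fun_eq_iff)
qed

lemma Dop_Fam: "Dop \<mu> (Fam j r s) = Fam j r (\<lambda>a. s (Suc a) - \<mu> * s a)"
  unfolding Dop_def Tm_Fam by (simp add: fun_eq_iff Fam_def)

lemma Diter_Fam: "(Dop \<mu> ^^ Suc t) (Fam j r (gseq t \<mu>)) = (\<lambda>_. 0)"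
proof (induction t)
  case 0
  have "Dop \<mu> (Fam j r (gseq 0 \<mu>)) = Fam j r (\<lambda>_. 0)" unfolding Dop_Fam by (simp add: gseq0_step)
  then show ?case by (simp add: Fam_def fun_eq_iff)
next
  case (Suc t)
  have "Dop \<mu> (Fam j r (gseq (Suc t) \<mu>)) = Fam j r (gseq t \<mu>)" unfolding Dop_Fam by (simp add: gseq_step)
  then show ?case using Suc by (simp add: funpow_Suc_right del: funpow.simps)
qed

lemma Diter_pstep: "j < n \<Longrightarrow> (\<lambda>l. (Dop \<mu> ^^ e) f (j, l)) = pstep m ([:-\<mu>, 1:] ^ e) (\<lambda>l. f (j, l))"
proof (induction e)
  case 0
  then show ?case by (simp add: pstep_def fun_eq_iff)
next
  case (Suc e)
  have "pstep m ([:-\<mu>, 1:] ^ Suc e) (\<lambda>l. f (j, l)) = pstep m [:-\<mu>, 1:] (\<lambda>l. (Dop \<mu> ^^ e) f (j, l))"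
    by (simp only: power_Suc pstep_mult Suc)
  also have "\<dots> = (\<lambda>l. (Dop \<mu> ^^ Suc e) f (j, l))"
    by (simp add: fun_eq_iff pstep_lin Dop_def Tm_def)
  finally show ?case by simp
qed

lemma Diter_VanM: "(Dop \<mu> ^^ e) f = (\<lambda>_. 0) \<Longrightarrow> VanM ([:-\<mu>, 1:] ^ e) f"
  unfolding VanM_def
proof (intro allI impI)
  fix j l assume a: "(Dop \<mu> ^^ e) f = (\<lambda>_. 0)" and j: "j < n"
  have "pstep m ([:- \<mu>, 1:] ^ e) (\<lambda>l. f (j, l)) = (\<lambda>l. (Dop \<mu> ^^ e) f (j, l))"
    using Diter_pstep[OF j] by simp
  then show "pstep m ([:- \<mu>, 1:] ^ e) (\<lambda>l. f (j, l)) l = 0" using a by simp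
qed

lemma RD_add: "f \<in> RD \<Longrightarrow> h \<in> RD \<Longrightarrow> (\<lambda>p. f p + h p) \<in> RD"
proof -
  assume f: "f \<in> RD" and h: "h \<in> RD"
  obtain P where P: "P \<noteq> 0" "VanM P f" using f by (auto simp: RD_def)
  obtain Q where Q: "Q \<noteq> 0" "VanM Q h" using h by (auto simp: RD_def)
  have "VanM (P * Q) (\<lambda>p. f p + h p)"
    unfolding VanM_def
  proof (intro allI impI)
    fix j l assume j: "j < n"
    have a: "pstep m (P * Q) (\<lambda>l. f (j, l)) l = 0"
      by (rule pstep_dvd[of P]) (use P j in \<open>auto simp: VanM_def\<close>)
    have b: "pstep m (P * Q) (\<lambda>l. h (j, l)) l = 0"
      by (rule pstep_dvd[of Q]) (use Q j in \<open>auto simp: VanM_def\<close>)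
    show "pstep m (P * Q) (\<lambda>l. f (j, l) + h (j, l)) l = 0"
      using a b by (simp add: pstep_add_seq)
  qed
  moreover have "zeroJ (\<lambda>p. f p + h p)" using f h by (simp add: RD_def zeroJ_def)
  ultimately show ?thesis using P(1) Q(1) unfolding RD_def by (intro CollectI conjI exI[of _ "P * Q"]) auto
qed

lemma RD_smult: "f \<in> RD \<Longrightarrow> (\<lambda>p. c * f p) \<in> RD"
  by (auto simp: RD_def zeroJ_def VanM_def pstep_smult_seq)

lemma RD_zero: "(\<lambda>_. 0) \<in> RD"
proof -
  have "VanM 1 (\<lambda>_. 0)" by (simp add: VanM_def pstep_zero_seq)
  then show ?thesis by (auto simp: RD_def zeroJ_def intro!: exI[of _ 1])
qed

lemma basic_conv:
  "conv n v \<xi> (Fam j1 r1 (gseq t1 \<mu>1)) (Fam j2 r2 (gseq t2 \<mu>2)) \<in> RD"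
proof -
  have "(Dop (\<mu>1 + \<mu>2) ^^ (Suc t1 + Suc t2)) (conv n v \<xi> (Fam j1 r1 (gseq t1 \<mu>1)) (Fam j2 r2 (gseq t2 \<mu>2))) = (\<lambda>_. 0)"
    by (rule Leibniz) (rule Diter_Fam)+
  then have "VanM ([:-(\<mu>1 + \<mu>2), 1:] ^ (Suc t1 + Suc t2)) (conv n v \<xi> (Fam j1 r1 (gseq t1 \<mu>1)) (Fam j2 r2 (gseq t2 \<mu>2)))"
    by (rule Diter_VanM)
  moreover have "[:-(\<mu>1 + \<mu>2), 1:] ^ (Suc t1 + Suc t2) \<noteq> 0" by (rule power_not_zero) simp
  ultimately show ?thesis using conv_zeroJ by (auto simp: RD_def)
qed

lemma conv_Span: "f \<in> Span \<Longrightarrow> h \<in> Span \<Longrightarrow> conv n v \<xi> f h \<in> RD"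
proof (induction f rule: Span.induct)
  case (b j r t \<mu>)
  show ?case using b(3)
  proof (induction h rule: Span.induct)
    case (b j' r' t' \<mu>') show ?case by (rule basic_conv)
  next
    case z then show ?case by (simp add: conv_zero_r RD_zero)
  next
    case (a f h) then show ?case by (simp add: conv_add_r RD_add)
  next
    case (s f c) then show ?case by (simp add: conv_smult_r RD_smult)
  qed
next
  case z then show ?case by (simp add: conv_zero_l RD_zero)
next
  case (a f1 f2) then show ?case by (simp add: conv_add_l RD_add)
next
  case (s f c) then show ?case by (simp add: conv_smult_l RD_smult)
qed

end


context TT
begin

definition Gs where "Gs = range (psi n v) \<union> {omega n \<xi>, E2 n v, E1 n}"

abbreviation "GA \<equiv> gen_alg n v \<xi> Gs"

lemma GA_zero: "(\<lambda>_. 0) \<in> GA"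
proof -
  have "(\<lambda>p. 0 * counit n p) \<in> GA" by (rule gen_alg.smult[OF gen_alg.unit])
  then show ?thesis by simp
qed

lemma GA_sum: "finite S \<Longrightarrow> (\<forall>i\<in>S. F i \<in> GA) \<Longrightarrow> (\<lambda>p. \<Sum>i\<in>S. F i p) \<in> GA"
proof (induction S rule: finite_induct)
  case empty then show ?case by (simp add: GA_zero)
next
  case (insert x S)
  then show ?case using gen_alg.add[of "F x" _ _ _ _ "\<lambda>p. \<Sum>i\<in>S. F i p"] by simp
qed

lemma omega_GA: "omega n \<xi> \<in> GA" by (rule gen_alg.gen) (simp add: Gs_def)
lemma E1_GA: "E1 n \<in> GA" by (rule gen_alg.gen) (simp add: Gs_def)
lemma E2_GA: "E2 n v \<in> GA" by (rule gen_alg.gen) (simp add: Gs_def)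
lemma psi_GA: "psi n v c \<in> GA" by (rule gen_alg.gen) (simp add: Gs_def)

lemma conv_omega: "j < n \<Longrightarrow> conv n v \<xi> (omega n \<xi>) u (j, l) = \<xi> ^ j * u (j, l)"
proof -
  assume j: "j < n"
  have "conv n v \<xi> (omega n \<xi>) u (j, l) = (\<Sum>b\<in>{..l}. if b = 0 then qb q l b * \<xi> ^ j * u ((j + v * b) mod n, l - b) else 0)"
    unfolding conv_f[OF j] by (rule sum.cong) (auto simp: omega_def j)
  also have "\<dots> = \<xi> ^ j * u (j, l)" using j by simp
  finally show ?thesis .
qed

lemma omp: "zeroJ u \<Longrightarrow> ((conv n v \<xi> (omega n \<xi>)) ^^ k) u (j, l) = \<xi> ^ (k * j) * u (j, l)"
proof (induction k arbitrary: j l)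
  case 0 then show ?case by simp
next
  case (Suc k)
  show ?case
  proof (cases "j < n")
    case True
    then show ?thesis using Suc by (simp add: conv_omega power_add mult.commute mult.left_commute)
  next
    case False
    then show ?thesis using Suc.prems by (simp add: conv_def zeroJ_def)
  qed
qed

lemma omp_GA: "u \<in> GA \<Longrightarrow> ((conv n v \<xi> (omega n \<xi>)) ^^ k) u \<in> GA"
proof (induction k)
  case (Suc k)
  then show ?case using gen_alg.mult[OF omega_GA Suc.IH] by simp
qed simp

lemma geom_sum_zero: "\<zeta> ^ n = 1 \<Longrightarrow> \<zeta> \<noteq> 1 \<Longrightarrow> (\<Sum>k<n. \<zeta> ^ k) = (0::'k)"
proof -
  assume a: "\<zeta> ^ n = 1" "\<zeta> \<noteq> 1"
  have "(1 - \<zeta>) * qsum \<zeta> n = 0" using a by (simp add: qsum_mul)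
  then show ?thesis using a by (simp add: qsum_def)
qed

lemma loc_GA:
  assumes u: "u \<in> GA" "zeroJ u" and j0: "j0 < n"
  shows "(\<lambda>p. if fst p = j0 then u p else 0) \<in> GA"
proof -
  let ?w = "\<lambda>p. (1 / of_nat n) * (\<Sum>k<n. \<xi> ^ (k * (n - j0)) * ((conv n v \<xi> (omega n \<xi>)) ^^ k) u p)"
  have inGA: "?w \<in> GA"
    by (intro gen_alg.smult GA_sum) (auto intro: gen_alg.smult omp_GA u(1))
  have "?w = (\<lambda>p. if fst p = j0 then u p else 0)"
  proof
    fix p :: "nat \<times> nat"
    obtain j l where p: "p = (j, l)" by (cases p)
    show "?w p = (if fst p = j0 then u p else 0)"
    proof (cases "j < n")
      case False
      then show ?thesis using u(2) j0 by (auto simp: p zeroJ_def omp)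
    next
      case True
      let ?z = "\<xi> ^ (n - j0 + j)"
      have e: "\<xi> ^ (k * (n - j0)) * \<xi> ^ (k * j) = ?z ^ k" for k
        by (simp add: power_mult[symmetric] power_add[symmetric] algebra_simps)
      have "?w p = (1 / of_nat n) * ((\<Sum>k<n. ?z ^ k) * u (j, l))"
        by (simp add: p omp[OF u(2)] sum_distrib_right e mult.assoc[symmetric])
      also have "\<dots> = (if j = j0 then u (j, l) else 0)"
      proof (cases "j = j0")
        case True
        then have "?z = 1" using j0 xin by simp
        then show ?thesis using True n0 by simp
      next
        case False
        have zn: "?z ^ n = 1" by (simp add: power_mult[symmetric] mult.commute power_mult xin)
        have "?z \<noteq> 1"
        proof
          assume "?z = 1"
          then have "n dvd (n - j0 + j)" by (rule xi_dvd)
          moreover have "0 < n - j0 + j" "n - j0 + j < 2 * n" using j0 True by auto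
          ultimately have "n - j0 + j = n"
          proof -
            assume d: "n dvd (n - j0 + j)" and i: "0 < n - j0 + j" "n - j0 + j < 2 * n"
            obtain c where c: "n - j0 + j = n * c" using d by blast
            have "0 < c" using c i(1) by (cases c) auto
            moreover have "c < 2" using c i(2) n0 by (simp add: mult.commute)
            ultimately have "c = 1" by simp
            then show ?thesis using c by simp
          qed
          then show False using False j0 True by simp
        qed
        then show ?thesis using geom_sum_zero[OF zn] False by simp
      qed
      finally show ?thesis by (simp add: p)
    qed
  qed
  then show ?thesis using inGA by simp
qed

definition Gf :: "nat \<Rightarrow> (nat \<Rightarrow> 'k) \<Rightarrow> (nat \<times> nat \<Rightarrow> 'k)" where
  "Gf r s = (\<lambda>p. if fst p < n \<and> snd p mod m = r then s (snd p div m) else 0)"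

lemma Gf_zeroJ: "zeroJ (Gf r s)" by (simp add: zeroJ_def Gf_def)

lemma conv_delta:
  assumes j: "j < n" and e: "\<And>j' l'. e (j', l') = (if j' < n \<and> l' = L then 1 else 0)"
  shows "conv n v \<xi> u e (j, l) = (if L \<le> l then qb q l (l - L) * u (j, l - L) else 0)"
proof -
  have "conv n v \<xi> u e (j, l) = (\<Sum>b\<in>{..l}. if b = l - L \<and> L \<le> l then qb q l b * u (j, b) else 0)"
    unfolding conv_f[OF j] by (rule sum.cong) (auto simp: e n0)
  also have "\<dots> = (if L \<le> l then qb q l (l - L) * u (j, l - L) else 0)"
    by (simp only: sum_delta_cond finite_atMost) auto
  finally show ?thesis .
qed

lemma psi_Gf: "psi n v c = Gf 0 (gseq 0 c)"
  by (simp add: psi_def Gf_def gseq_def fun_eq_iff dvd_eq_mod_eq_0 Let_def)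

lemma Gf_E2: "conv n v \<xi> (Gf 0 (gseq t \<mu>)) (E2 n v) = (\<lambda>p. of_nat (Suc t) * Gf 0 (gseq (Suc t) \<mu>) p)"
proof
  fix p :: "nat \<times> nat"
  obtain j l where p: "p = (j, l)" by (cases p)
  show "conv n v \<xi> (Gf 0 (gseq t \<mu>)) (E2 n v) p = of_nat (Suc t) * Gf 0 (gseq (Suc t) \<mu>) p"
  proof (cases "j < n")
    case False then show ?thesis by (simp add: p conv_def Gf_def)
  next
    case True
    have c: "conv n v \<xi> (Gf 0 (gseq t \<mu>)) (E2 n v) (j, l) = (if m \<le> l then qb q l (l - m) * Gf 0 (gseq t \<mu>) (j, l - m) else 0)"
      by (rule conv_delta[OF True]) (simp add: E2_def)
    show ?thesis
    proof (cases "l mod m = 0")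
      case False
      have g1: "(if m \<le> l then qb q l (l - m) * Gf 0 (gseq t \<mu>) (j, l - m) else 0) = 0"
      proof (cases "m \<le> l")
        case True
        then have "(l - m) mod m \<noteq> 0" using False by (simp add: le_mod_geq)
        then have "Gf 0 (gseq t \<mu>) (j, l - m) = 0" by (simp add: Gf_def)
        then show ?thesis by simp
      qed simp
      have g2: "Gf 0 (gseq (Suc t) \<mu>) (j, l) = 0" using False by (simp add: Gf_def)
      show ?thesis unfolding p c g1 g2 by simp
    next
      case z: True
      then obtain a where a: "l = m * a" by (metis mult_div_mod_eq add_0_right)
      show ?thesis
      proof (cases a)
        case 0
        then show ?thesis using a m1 True unfolding p c by (simp add: Gf_def gseq_def)
      next
        case (Suc a')
        have lm: "l - m = m * a'" "m \<le> l" using a Suc by (simp_all add: algebra_simps)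
        have lA: "l = m * a' + m" using a Suc by simp
        have qq: "qb q l (l - m) = of_nat (Suc a')"
          using qb_mult'[of a'] unfolding lm(1) lA[symmetric] .
        have dv: "(m * a') div m = a'" "(m * a') mod m = 0" "l div m = Suc a'" using m1 a Suc by simp_all
        have g1: "Gf 0 (gseq t \<mu>) (j, l - m) = gseq t \<mu> a'" using True lm dv by (simp add: Gf_def)
        have g2: "Gf 0 (gseq (Suc t) \<mu>) (j, l) = gseq (Suc t) \<mu> (Suc a')" using True z dv by (simp add: Gf_def)
        have bin: "of_nat (Suc a') * (of_nat (a' choose t) :: 'k) = of_nat (Suc t) * of_nat (Suc a' choose Suc t)"
          by (metis Suc_times_binomial_eq mult.commute of_nat_mult)
        have gs: "of_nat (Suc a') * gseq t \<mu> a' = of_nat (Suc t) * gseq (Suc t) \<mu> (Suc a')"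
          by (simp only: gseq_def diff_Suc_Suc mult.assoc[symmetric] bin)
        show ?thesis unfolding p c if_P[OF lm(2)] g1 g2 qq by (rule gs)
      qed
    qed
  qed
qed

lemma m_gt1: "Suc r < m \<Longrightarrow> q \<noteq> 1"
proof -
  assume "Suc r < m"
  then have "1 < m" by simp
  then have "q ^ 1 \<noteq> 1" using q_prim by blast
  then show ?thesis by simp
qed

lemma Gf_E1:
  assumes r: "Suc r < m"
  shows "conv n v \<xi> (Gf r s) (E1 n) = (\<lambda>p. qsum q (Suc r) * Gf (Suc r) s p)"
proof
  fix p :: "nat \<times> nat"
  obtain j l where p: "p = (j, l)" by (cases p)
  show "conv n v \<xi> (Gf r s) (E1 n) p = qsum q (Suc r) * Gf (Suc r) s p"
  proof (cases "j < n")
    case False then show ?thesis by (simp add: p conv_def Gf_def)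
  next
    case True
    have c: "conv n v \<xi> (Gf r s) (E1 n) (j, l) = (if 1 \<le> l then qb q l (l - 1) * Gf r s (j, l - 1) else 0)"
      by (rule conv_delta[OF True]) (simp add: E1_def)
    show ?thesis
    proof (cases l)
      case 0
      then show ?thesis using r unfolding p c by (simp add: Gf_def)
    next
      case (Suc l')
      have md: "l' = m * (l' div m) + l' mod m" by simp
      have lm': "l' mod m < m" using m1 by simp
      show ?thesis
      proof (cases "l' mod m = r")
        case True2: True
        have sl: "Suc l' = m * (l' div m) + Suc r" using md True2 by simp
        have sl2: "Suc l' = Suc r + (l' div m) * m" using sl by (simp add: algebra_simps)
        have s1: "Suc l' div m = l' div m + Suc r div m" unfolding sl2 by (rule div_mult_self1) (use m1 in simp)
        have s2: "Suc l' mod m = Suc r mod m" unfolding sl2 by (rule mod_mult_self1)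
        have smod: "Suc l' mod m = Suc r" "Suc l' div m = l' div m"
          using r s1 s2 by simp_all
        have "(1 - q) * qsum q (Suc l') = (1 - q) * qsum q (Suc r)"
        proof -
          have "q ^ Suc l' = q ^ (Suc l' mod m)" using pow_mod_n[OF qm] by simp
          then show ?thesis by (simp add: qsum_mul smod)
        qed
        then have qs: "qsum q (Suc l') = qsum q (Suc r)" using m_gt1[OF r] by simp
        show ?thesis using True True2 smod unfolding p c by (simp add: Gf_def Suc qb_sub1 qs)
      next
        case False
        have "Suc l' mod m \<noteq> Suc r"
        proof
          assume a: "Suc l' mod m = Suc r"
          have "Suc l' mod m = (if Suc (l' mod m) = m then 0 else Suc (l' mod m))" by (rule mod_Suc)
          then show False using a False by (auto split: if_splits)
        qed
        then show ?thesis using True False unfolding p c by (simp add: Gf_def Suc)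
      qed
    qed
  qed
qed

lemma Gf0_GA: "Gf 0 (gseq t \<mu>) \<in> GA"
proof (induction t)
  case 0 then show ?case using psi_GA[of \<mu>] by (simp add: psi_Gf)
next
  case (Suc t)
  have "conv n v \<xi> (Gf 0 (gseq t \<mu>)) (E2 n v) \<in> GA" by (rule gen_alg.mult[OF Suc E2_GA])
  then have "(\<lambda>p. (1 / of_nat (Suc t)) * conv n v \<xi> (Gf 0 (gseq t \<mu>)) (E2 n v) p) \<in> GA" by (rule gen_alg.smult)
  moreover have "(\<lambda>p. (1 / of_nat (Suc t)) * conv n v \<xi> (Gf 0 (gseq t \<mu>)) (E2 n v) p) = Gf 0 (gseq (Suc t) \<mu>)"
    unfolding Gf_E2 by (simp add: fun_eq_iff del: of_nat_Suc)
  ultimately show ?case by simp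
qed

lemma Gf_GA: "r < m \<Longrightarrow> Gf r (gseq t \<mu>) \<in> GA"
proof (induction r)
  case 0 show ?case by (rule Gf0_GA)
next
  case (Suc r)
  have r: "Suc r < m" using Suc by simp
  have "conv n v \<xi> (Gf r (gseq t \<mu>)) (E1 n) \<in> GA" by (rule gen_alg.mult[OF Suc.IH E1_GA]) (use r in simp)
  then have "(\<lambda>p. (1 / qsum q (Suc r)) * conv n v \<xi> (Gf r (gseq t \<mu>)) (E1 n) p) \<in> GA" by (rule gen_alg.smult)
  moreover have "qsum q (Suc r) \<noteq> 0"
  proof
    assume "qsum q (Suc r) = 0"
    then have "1 - q ^ Suc r = 0" using qsum_mul[of q "Suc r"] by simp
    then show False using q_prim r by auto
  qed
  then have "(\<lambda>p. (1 / qsum q (Suc r)) * conv n v \<xi> (Gf r (gseq t \<mu>)) (E1 n) p) = Gf (Suc r) (gseq t \<mu>)"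
    unfolding Gf_E1[OF r] by (simp add: fun_eq_iff)
  ultimately show ?case by simp
qed

lemma Span_GA: "f \<in> Span \<Longrightarrow> f \<in> GA"
proof (induction rule: Span.induct)
  case (b j r t \<mu>)
  have "(\<lambda>p. if fst p = j then Gf r (gseq t \<mu>) p else 0) \<in> GA"
    by (rule loc_GA[OF Gf_GA[OF b(2)] Gf_zeroJ b(1)])
  moreover have "(\<lambda>p. if fst p = j then Gf r (gseq t \<mu>) p else 0) = Fam j r (gseq t \<mu>)"
    by (auto simp: Gf_def Fam_def fun_eq_iff)
  ultimately show ?case by simp
next
  case z then show ?case by (rule GA_zero)
next
  case (a f h) show ?case by (rule gen_alg.add[OF a.IH])
next
  case (s f c) show ?case by (rule gen_alg.smult[OF s.IH])
qed

end


lemma if_mult0: "(if P then x else 0) * (y::'k::field) = (if P then x * y else 0)"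
  by simp

lemma mult_if0: "(x::'k::field) * (if P then y else 0) = (if P then x * y else 0)"
  by simp

lemma evalf_sup:
  assumes "finite S" "supp a \<subseteq> S"
  shows "evalf f a = (\<Sum>p\<in>S. a p * f p)"
  unfolding evalf_def by (rule sum_supp_sup[OF assms]) simp

lemma supp_hmul:
  assumes A: "finite A" "supp a \<subseteq> A" and B: "finite B" "supp b \<subseteq> B"
  shows "supp (hmul n \<xi> a b) \<subseteq> (\<lambda>(p, q). bidx n p q) ` (A \<times> B)"
proof
  fix t assume "t \<in> supp (hmul n \<xi> a b)"
  then have "hmul n \<xi> a b t \<noteq> 0" by (simp add: supp_def)
  then obtain p where p: "p \<in> A" "(\<Sum>q\<in>B. if bidx n p q = t then bcoef \<xi> p q * a p * b q else 0) \<noteq> 0"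
    unfolding hmul_alt[OF A B] by (rule sum.not_neutral_contains_not_neutral)
  from p(2) obtain q where q: "q \<in> B" "(if bidx n p q = t then bcoef \<xi> p q * a p * b q else 0) \<noteq> 0"
    by (rule sum.not_neutral_contains_not_neutral)
  have "t = (\<lambda>(p, q). bidx n p q) (p, q)" using q(2) by (simp split: if_splits)
  moreover have "(p, q) \<in> A \<times> B" using p q by simp
  ultimately show "t \<in> (\<lambda>(p, q). bidx n p q) ` (A \<times> B)" by (rule image_eqI)
qed

lemma evalf_hmul:
  assumes A: "finite A" "supp a \<subseteq> A" and B: "finite B" "supp b \<subseteq> B"
  shows "evalf f (hmul n \<xi> a b) = (\<Sum>p\<in>A. \<Sum>q\<in>B. bcoef \<xi> p q * a p * b q * f (bidx n p q))"
proof -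
  let ?T = "(\<lambda>(p, q). bidx n p q) ` (A \<times> B)"
  have fT: "finite ?T" using A B by simp
  have h: "hmul n \<xi> a b t = (\<Sum>p\<in>A. \<Sum>q\<in>B. if bidx n p q = t then bcoef \<xi> p q * a p * b q else 0)" for t
    by (rule hmul_alt[OF A B])
  have sT: "supp (hmul n \<xi> a b) \<subseteq> ?T"
  proof
    fix t assume "t \<in> supp (hmul n \<xi> a b)"
    then have "hmul n \<xi> a b t \<noteq> 0" by (simp add: supp_def)
    then obtain p where p: "p \<in> A" "(\<Sum>q\<in>B. if bidx n p q = t then bcoef \<xi> p q * a p * b q else 0) \<noteq> 0"
      unfolding h by (rule sum.not_neutral_contains_not_neutral)
    from p(2) obtain q where q: "q \<in> B" "(if bidx n p q = t then bcoef \<xi> p q * a p * b q else 0) \<noteq> 0"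
      by (rule sum.not_neutral_contains_not_neutral)
    have "t = (\<lambda>(p, q). bidx n p q) (p, q)" using q(2) by (simp split: if_splits)
    moreover have "(p, q) \<in> A \<times> B" using p q by simp
    ultimately show "t \<in> ?T" by (rule image_eqI)
  qed
  have "evalf f (hmul n \<xi> a b) = (\<Sum>t\<in>?T. hmul n \<xi> a b t * f t)" by (rule evalf_sup[OF fT sT])
  also have "\<dots> = (\<Sum>t\<in>?T. \<Sum>p\<in>A. \<Sum>q\<in>B. if bidx n p q = t then bcoef \<xi> p q * a p * b q * f t else 0)"
    unfolding h by (simp add: sum_distrib_right if_mult0)
  also have "\<dots> = (\<Sum>p\<in>A. \<Sum>q\<in>B. \<Sum>t\<in>?T. if bidx n p q = t then bcoef \<xi> p q * a p * b q * f t else 0)"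
    by (simp add: sum.swap[of _ ?T] sum.swap[of _ _ B])
  also have "\<dots> = (\<Sum>p\<in>A. \<Sum>q\<in>B. bcoef \<xi> p q * a p * b q * f (bidx n p q))"
  proof (intro sum.cong refl)
    fix p q assume "p \<in> A" "q \<in> B"
    then have "bidx n p q \<in> ?T" using image_eqI[of "bidx n p q" "\<lambda>(p, q). bidx n p q" "(p, q)"] by simp
    then show "(\<Sum>t\<in>?T. if bidx n p q = t then bcoef \<xi> p q * a p * b q * f t else 0) = bcoef \<xi> p q * a p * b q * f (bidx n p q)"
      using fT by (simp add: sum.delta)
  qed
  finally show ?thesis .
qed


lemma Hspace_add: "a \<in> Hspace n \<Longrightarrow> b \<in> Hspace n \<Longrightarrow> (\<lambda>p. a p + b p) \<in> Hspace n"
proof -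
  assume a: "a \<in> Hspace n" and b: "b \<in> Hspace n"
  have "supp (\<lambda>p. a p + b p) \<subseteq> supp a \<union> supp b" by (auto simp: supp_def)
  then show ?thesis using a b by (auto simp: Hspace_def intro: finite_subset)
qed

lemma Hspace_smult: "a \<in> Hspace n \<Longrightarrow> (\<lambda>p. c * a p) \<in> Hspace n"
proof -
  assume a: "a \<in> Hspace n"
  have "supp (\<lambda>p. c * a p) \<subseteq> supp a" by (auto simp: supp_def)
  then show ?thesis using a by (auto simp: Hspace_def intro: finite_subset)
qed

lemma Hspace_zero: "(\<lambda>_. 0) \<in> Hspace n"
  by (simp add: Hspace_def supp_def)

lemma Hspace_single: "fst p < n \<Longrightarrow> single p c \<in> Hspace n"
  by (cases p) (auto simp: Hspace_def single_def supp_def intro: finite_subset[of _ "{p}"])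

lemma Hspace_hmul:
  assumes n: "0 < n" and a: "a \<in> Hspace n" and b: "b \<in> Hspace n"
  shows "hmul n \<xi> a b \<in> Hspace n"
proof -
  have fa: "finite (supp a)" and fb: "finite (supp b)" using a b by (auto simp: Hspace_def)
  have "supp (hmul n \<xi> a b) \<subseteq> (\<lambda>(p, q). bidx n p q) ` (supp a \<times> supp b)"
    by (rule supp_hmul[OF fa _ fb]) auto
  then have f: "finite (supp (hmul n \<xi> a b))" using fa fb by (auto intro: finite_subset)
  have "hmul n \<xi> a b (j, l) = 0" if "n \<le> j" for j l
  proof -
    have "bidx n p q \<noteq> (j, l)" for p q
    proof
      assume "bidx n p q = (j, l)"
      then have "j < n" using n by (auto simp: bidx_def)
      then show False using that by simp
    qed
    then show ?thesis unfolding hmul_def by simp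
  qed
  then show ?thesis using f by (simp add: Hspace_def)
qed

lemma evalf_add: "a \<in> Hspace n \<Longrightarrow> b \<in> Hspace n \<Longrightarrow> evalf f (\<lambda>p. a p + b p) = evalf f a + evalf f b"
proof -
  assume a: "a \<in> Hspace n" and b: "b \<in> Hspace n"
  let ?S = "supp a \<union> supp b"
  have fS: "finite ?S" using a b by (auto simp: Hspace_def)
  have "supp (\<lambda>p. a p + b p) \<subseteq> ?S" by (auto simp: supp_def)
  then show ?thesis
    by (simp add: evalf_sup[OF fS] distrib_right sum.distrib)
qed

lemma evalf_smult: "a \<in> Hspace n \<Longrightarrow> evalf f (\<lambda>p. c * a p) = c * evalf f a"
proof -
  assume a: "a \<in> Hspace n"
  have fS: "finite (supp a)" using a by (auto simp: Hspace_def)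
  have "supp (\<lambda>p. c * a p) \<subseteq> supp a" by (auto simp: supp_def)
  then show ?thesis
    by (simp add: evalf_sup[OF fS] sum_distrib_left mult.assoc)
qed

lemma evalf_zero: "evalf f (\<lambda>_. 0) = 0"
  by (simp add: evalf_def supp_def)

context TT
begin

definition Wset :: "'k poly \<Rightarrow> (nat \<times> nat \<Rightarrow> 'k) set" where
  "Wset Q = {f. zeroJ f \<and> (\<forall>j<n. \<forall>l. pstep n Q (\<lambda>l. f (j, l)) l = 0)}"

definition Iset :: "'k poly \<Rightarrow> (nat \<times> nat \<Rightarrow> 'k) set" where
  "Iset Q = {a \<in> Hspace n. \<forall>f\<in>Wset Q. evalf f a = 0}"

definition lt :: "(nat \<times> nat \<Rightarrow> 'k) \<Rightarrow> (nat \<times> nat \<Rightarrow> 'k) \<Rightarrow> (nat \<times> nat \<Rightarrow> 'k)" where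
  "lt a f = (\<lambda>q. if fst q < n then \<Sum>p\<in>supp a. a p * bcoef \<xi> p q * f (bidx n p q) else 0)"

definition rt :: "(nat \<times> nat \<Rightarrow> 'k) \<Rightarrow> (nat \<times> nat \<Rightarrow> 'k) \<Rightarrow> (nat \<times> nat \<Rightarrow> 'k)" where
  "rt a f = (\<lambda>q. if fst q < n then \<Sum>p\<in>supp a. a p * bcoef \<xi> q p * f (bidx n q p) else 0)"

lemma evalf_lt:
  assumes a: "a \<in> Hspace n" and b: "b \<in> Hspace n"
  shows "evalf f (hmul n \<xi> a b) = evalf (lt a f) b"
proof -
  have fa: "finite (supp a)" and fb: "finite (supp b)" using a b by (auto simp: Hspace_def)
  have bn: "fst q < n" if q: "q \<in> supp b" for q
  proof (rule ccontr)
    assume "\<not> fst q < n"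
    then have "b q = 0" using b by (cases q) (auto simp: Hspace_def)
    then show False using q by (simp add: supp_def)
  qed
  have "evalf f (hmul n \<xi> a b) = (\<Sum>p\<in>supp a. \<Sum>q\<in>supp b. bcoef \<xi> p q * a p * b q * f (bidx n p q))"
    by (rule evalf_hmul[OF fa _ fb]) auto
  also have "\<dots> = (\<Sum>q\<in>supp b. \<Sum>p\<in>supp a. bcoef \<xi> p q * a p * b q * f (bidx n p q))"
    by (rule sum.swap)
  also have "\<dots> = (\<Sum>q\<in>supp b. b q * lt a f q)"
    by (rule sum.cong[OF refl]) (simp add: lt_def bn sum_distrib_left algebra_simps)
  also have "\<dots> = evalf (lt a f) b" by (simp add: evalf_def)
  finally show ?thesis .
qed

lemma evalf_rt:
  assumes a: "a \<in> Hspace n" and b: "b \<in> Hspace n"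
  shows "evalf f (hmul n \<xi> b a) = evalf (rt a f) b"
proof -
  have fa: "finite (supp a)" and fb: "finite (supp b)" using a b by (auto simp: Hspace_def)
  have bn: "fst q < n" if q: "q \<in> supp b" for q
  proof (rule ccontr)
    assume "\<not> fst q < n"
    then have "b q = 0" using b by (cases q) (auto simp: Hspace_def)
    then show False using q by (simp add: supp_def)
  qed
  have "evalf f (hmul n \<xi> b a) = (\<Sum>q\<in>supp b. \<Sum>p\<in>supp a. bcoef \<xi> q p * b q * a p * f (bidx n q p))"
    by (rule evalf_hmul[OF fb _ fa]) auto
  also have "\<dots> = (\<Sum>q\<in>supp b. b q * rt a f q)"
    by (rule sum.cong[OF refl]) (simp add: rt_def bn sum_distrib_left algebra_simps)
  also have "\<dots> = evalf (rt a f) b" by (simp add: evalf_def)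
  finally show ?thesis .
qed

lemma lt_W:
  assumes a: "a \<in> Hspace n" and f: "f \<in> Wset Q"
  shows "lt a f \<in> Wset Q"
proof -
  have "pstep n Q (\<lambda>l. lt a f (j, l)) l = 0" if j: "j < n" for j l
  proof -
    have "pstep n Q (\<lambda>l. lt a f (j, l)) l
        = (\<Sum>k\<le>degree Q. \<Sum>p\<in>supp a. coeff Q k * (a p * \<xi> ^ (snd p * j) * f ((fst p + j) mod n, snd p + l + n * k)))"
      by (simp add: pstep_def lt_def j bcoef_def bidx_def sum_distrib_left algebra_simps)
    also have "\<dots> = (\<Sum>p\<in>supp a. a p * \<xi> ^ (snd p * j) * pstep n Q (\<lambda>l. f ((fst p + j) mod n, l)) (snd p + l))"
      by (subst sum.swap) (simp add: pstep_def sum_distrib_left algebra_simps)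
    also have "\<dots> = 0"
      using f n0 by (intro sum.neutral ballI) (simp add: Wset_def)
    finally show ?thesis .
  qed
  then show ?thesis by (simp add: Wset_def zeroJ_def lt_def)
qed

lemma rt_W:
  assumes a: "a \<in> Hspace n" and f: "f \<in> Wset Q"
  shows "rt a f \<in> Wset Q"
proof -
  have xk: "\<xi> ^ ((l + n * k) * c) = \<xi> ^ (l * c)" for l k c
  proof -
    have "\<xi> ^ ((l + n * k) * c) = \<xi> ^ (l * c) * (\<xi> ^ n) ^ (k * c)"
      by (simp add: power_add power_mult[symmetric] algebra_simps)
    then show ?thesis using xin by simp
  qed
  have bc: "bcoef \<xi> (j, l + n * k) p = \<xi> ^ (l * fst p)" for j l k p by (simp add: bcoef_def xk)
  have "pstep n Q (\<lambda>l. rt a f (j, l)) l = 0" if j: "j < n" for j l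
  proof -
    have "pstep n Q (\<lambda>l. rt a f (j, l)) l
        = (\<Sum>k\<le>degree Q. \<Sum>p\<in>supp a. coeff Q k * (a p * \<xi> ^ (l * fst p) * f ((j + fst p) mod n, snd p + l + n * k)))"
      unfolding pstep_def rt_def fst_conv snd_conv if_P[OF j] bc by (simp add: bidx_def sum_distrib_left algebra_simps)
    also have "\<dots> = (\<Sum>p\<in>supp a. a p * \<xi> ^ (l * fst p) * pstep n Q (\<lambda>l. f ((j + fst p) mod n, l)) (snd p + l))"
      by (subst sum.swap) (simp add: pstep_def sum_distrib_left algebra_simps)
    also have "\<dots> = 0"
      using f n0 by (intro sum.neutral ballI) (simp add: Wset_def)
    finally show ?thesis .
  qed
  then show ?thesis by (simp add: Wset_def zeroJ_def rt_def)
qed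

lemma Iset_ideal: "is_ideal n \<xi> (Iset Q)"
  unfolding is_ideal_def
proof (intro conjI ballI allI)
  show "Iset Q \<subseteq> Hspace n" by (auto simp: Iset_def)
  show "(\<lambda>_. 0) \<in> Iset Q" by (simp add: Iset_def Hspace_zero evalf_zero)
next
  fix a b :: "nat \<times> nat \<Rightarrow> 'k" assume a: "a \<in> Iset Q" and b: "b \<in> Iset Q"
  then have aH: "a \<in> Hspace n" and bH: "b \<in> Hspace n" by (auto simp: Iset_def)
  show "(\<lambda>p. a p + b p) \<in> Iset Q" using a b
    unfolding Iset_def by (auto simp: Hspace_add[OF aH bH] evalf_add[OF aH bH])
next
  fix c :: 'k and a :: "nat \<times> nat \<Rightarrow> 'k" assume a: "a \<in> Iset Q"
  then have aH: "a \<in> Hspace n" by (auto simp: Iset_def)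
  show "(\<lambda>p. c * a p) \<in> Iset Q" using a
    unfolding Iset_def by (auto simp: Hspace_smult[OF aH] evalf_smult[OF aH])
next
  fix a b :: "nat \<times> nat \<Rightarrow> 'k" assume a: "a \<in> Hspace n" and b: "b \<in> Iset Q"
  have bH: "b \<in> Hspace n" using b by (simp add: Iset_def)
  show "hmul n \<xi> a b \<in> Iset Q"
    using b lt_W[OF a]
    unfolding Iset_def by (auto simp: Hspace_hmul[OF n0 a bH] evalf_lt[OF a bH])
next
  fix a b :: "nat \<times> nat \<Rightarrow> 'k" assume a: "a \<in> Hspace n" and b: "b \<in> Iset Q"
  have bH: "b \<in> Hspace n" using b by (simp add: Iset_def)
  show "hmul n \<xi> b a \<in> Iset Q"
    using b rt_W[OF a]
    unfolding Iset_def by (auto simp: Hspace_hmul[OF n0 bH a] evalf_rt[OF a bH])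
qed

abbreviation "Box Q \<equiv> {..<n} \<times> {..<n * degree Q}"

lemma rep:
  assumes Q: "Q \<noteq> 0" and j: "j < n"
  shows "\<exists>w. \<forall>f\<in>Wset Q. f (j, l) = (\<Sum>p\<in>Box Q. w p * f p)"
proof (induction l rule: less_induct)
  case (less l)
  let ?D = "degree Q"
  show ?case
  proof (cases "l < n * ?D")
    case True
    show ?thesis
    proof (intro exI ballI)
      fix f :: "nat \<times> nat \<Rightarrow> 'k"
      have "(\<Sum>p\<in>Box Q. (if p = (j, l) then 1 else 0) * f p) = f (j, l)"
        using True j by (simp add: if_mult0 sum.delta')
      then show "f (j, l) = (\<Sum>p\<in>Box Q. (if p = (j, l) then 1 else 0) * f p)" by simp
    qed
  next
    case False
    define l0 where "l0 = l - n * ?D"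
    have l: "l = l0 + n * ?D" using False by (simp add: l0_def)
    have lt: "l0 + n * k < l" if "k < ?D" for k using that n0 l by simp
    have "\<forall>k. k < ?D \<longrightarrow> (\<exists>w. \<forall>f\<in>Wset Q. f (j, l0 + n * k) = (\<Sum>p\<in>Box Q. w p * f p))"
      using less lt by blast
    then obtain W where W: "\<And>k f. k < ?D \<Longrightarrow> f \<in> Wset Q \<Longrightarrow> f (j, l0 + n * k) = (\<Sum>p\<in>Box Q. W k p * f p)"
      by metis
    have lc: "lead_coeff Q \<noteq> 0" using Q by simp
    show ?thesis
    proof (intro exI ballI)
      fix f assume f: "f \<in> Wset Q"
      have "pstep n Q (\<lambda>l. f (j, l)) l0 = 0" using f j by (simp add: Wset_def)
      then have "(\<Sum>k<?D. coeff Q k * f (j, l0 + n * k)) + lead_coeff Q * f (j, l) = 0"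
        by (simp add: pstep_def l lessThan_Suc_atMost[symmetric])
      then have "f (j, l) = - (1 / lead_coeff Q) * (\<Sum>k<?D. coeff Q k * f (j, l0 + n * k))"
        using lc by (simp add: field_simps add_eq_0_iff)
      also have "\<dots> = - (1 / lead_coeff Q) * (\<Sum>k<?D. coeff Q k * (\<Sum>p\<in>Box Q. W k p * f p))"
        using W f by simp
      also have "\<dots> = (\<Sum>p\<in>Box Q. (- (1 / lead_coeff Q) * (\<Sum>k<?D. coeff Q k * W k p)) * f p)"
        by (simp add: sum_distrib_left sum_distrib_right sum.swap[of _ "Box Q"] algebra_simps)
      finally show "f (j, l) = (\<Sum>p\<in>Box Q. (- (1 / lead_coeff Q) * (\<Sum>k<?D. coeff Q k * W k p)) * f p)" .
    qed
  qed
qed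

lemma single_at: "single p c x = (if x = p then c else 0)"
  by (simp add: single_def)

lemma Iset_codim:
  assumes Q: "Q \<noteq> 0"
  shows "finite_codim n (Iset Q)"
  unfolding finite_codim_def
proof (rule exI[of _ "(\<lambda>p. single p (1::'k)) ` Box Q"], intro conjI ballI)
  let ?F = "(\<lambda>p. single p (1::'k)) ` Box Q"
  show "finite ?F" by simp
  show "?F \<subseteq> Hspace n" by (auto intro: Hspace_single)
  fix a :: "nat \<times> nat \<Rightarrow> 'k" assume a: "a \<in> Hspace n"
  have fa: "finite (supp a)" using a by (simp add: Hspace_def)
  have an: "fst p < n" if "p \<in> supp a" for p
  proof (rule ccontr)
    assume "\<not> fst p < n"
    then have "a p = 0" using a by (cases p) (auto simp: Hspace_def)
    then show False using that by (simp add: supp_def)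
  qed
  have "\<forall>p. p \<in> supp a \<longrightarrow> (\<exists>w. \<forall>f\<in>Wset Q. f p = (\<Sum>p'\<in>Box Q. w p' * f p'))"
  proof (intro allI impI)
    fix p assume "p \<in> supp a"
    then have "fst p < n" by (rule an)
    then show "\<exists>w. \<forall>f\<in>Wset Q. f p = (\<Sum>p'\<in>Box Q. w p' * f p')"
      using rep[OF Q, of "fst p" "snd p"] by simp
  qed
  then obtain W where W: "\<And>p f. p \<in> supp a \<Longrightarrow> f \<in> Wset Q \<Longrightarrow> f p = (\<Sum>p'\<in>Box Q. W p p' * f p')"
    by metis
  define c where "c h = (\<Sum>p\<in>supp a. a p * (\<Sum>p'\<in>Box Q. W p p' * h p'))" for h :: "nat \<times> nat \<Rightarrow> 'k"
  have inj: "inj_on (\<lambda>p. single p (1::'k)) (Box Q)"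
    by (rule inj_onI) (metis single_at one_neq_zero)
  have cs: "c (single p' 1) = (\<Sum>p\<in>supp a. a p * W p p')" if "p' \<in> Box Q" for p'
    unfolding c_def using that by (simp add: single_at if_mult0 mult_if0 sum.delta' cong: if_cong)
  let ?S = "supp a \<union> Box Q"
  have fS: "finite ?S" using fa by simp
  let ?r = "\<lambda>x. a x - (\<Sum>h\<in>?F. c h * h x)"
  have rS: "supp ?r \<subseteq> ?S"
  proof
    fix x assume x: "x \<in> supp ?r"
    show "x \<in> ?S"
    proof (rule ccontr)
      assume "x \<notin> ?S"
      then have "a x = 0" "\<And>p. p \<in> Box Q \<Longrightarrow> single p (1::'k) x = 0"
        by (auto simp: supp_def single_at)
      then have "?r x = 0" by (simp add: sum.reindex[OF inj])
      then show False using x by (simp add: supp_def)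
    qed
  qed
  have rH: "?r \<in> Hspace n"
  proof -
    have "?r (j, l) = 0" if "n \<le> j" for j l
    proof -
      have "a (j, l) = 0" using a that by (simp add: Hspace_def)
      moreover have "single p (1::'k) (j, l) = 0" if "p \<in> Box Q" for p
        using that \<open>n \<le> j\<close> by (auto simp: single_at)
      ultimately show ?thesis by (simp add: sum.reindex[OF inj])
    qed
    then show ?thesis using fS rS by (auto simp: Hspace_def intro: finite_subset)
  qed
  have "evalf f ?r = 0" if f: "f \<in> Wset Q" for f
  proof -
    have e1: "(\<Sum>x\<in>?S. single p' (1::'k) x * f x) = f p'" if "p' \<in> Box Q" for p'
      using that fS by (simp add: single_at if_mult0 sum.delta')
    have e2: "(\<Sum>x\<in>?S. a x * f x) = (\<Sum>p\<in>supp a. a p * f p)"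
      by (rule sum.mono_neutral_right) (use fS in \<open>auto simp: supp_def\<close>)
    have "evalf f ?r = (\<Sum>x\<in>?S. ?r x * f x)" by (rule evalf_sup[OF fS rS])
    also have "\<dots> = (\<Sum>x\<in>?S. a x * f x) - (\<Sum>p'\<in>Box Q. c (single p' 1) * (\<Sum>x\<in>?S. single p' 1 x * f x))"
      by (simp add: sum.reindex[OF inj] left_diff_distrib sum_subtractf sum_distrib_right sum_distrib_left
          sum.swap[of _ ?S] algebra_simps)
    also have "(\<Sum>p'\<in>Box Q. c (single p' 1) * (\<Sum>x\<in>?S. single p' 1 x * f x))
        = (\<Sum>p'\<in>Box Q. (\<Sum>p\<in>supp a. a p * W p p') * f p')"
      by (rule sum.cong[OF refl]) (simp add: cs e1)
    also have "\<dots> = (\<Sum>p\<in>supp a. a p * (\<Sum>p'\<in>Box Q. W p p' * f p'))"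
      by (simp add: sum_distrib_left sum_distrib_right sum.swap[of _ "Box Q"] algebra_simps)
    also have "\<dots> = (\<Sum>p\<in>supp a. a p * f p)"
      using W f by simp
    finally show ?thesis using e2 by simp
  qed
  then show "\<exists>c. (\<lambda>p. a p - (\<Sum>h\<in>?F. c h * h p)) \<in> Iset Q"
    using rH by (intro exI[of _ c]) (simp add: Iset_def)
qed

lemma RD_fd:
  assumes ac: "alg_closed_field TYPE('k)" and f: "f \<in> RD"
  shows "f \<in> finite_dual n \<xi>"
proof -
  obtain P where P: "P \<noteq> 0" "VanM P f" and z: "zeroJ f" using f by (auto simp: RD_def)
  obtain Q where Q: "Q \<noteq> 0" "P dvd pcompose Q (monom 1 (gcd n v))"
    using factor_pcomp[OF ac P(1)] by blast
  have "f \<in> Wset Q"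
  proof -
    have "pstep n Q (\<lambda>l. f (j, l)) l = 0" if j: "j < n" for j l
    proof -
      have "pstep m (pcompose Q (monom 1 (gcd n v))) (\<lambda>l. f (j, l)) l = 0"
        by (rule pstep_dvd[OF Q(2)]) (use P(2) j in \<open>simp add: VanM_def\<close>)
      then show ?thesis unfolding pstep_pcomp by simp
    qed
    then show ?thesis using z by (simp add: Wset_def)
  qed
  then show ?thesis
    unfolding finite_dual_def using z Iset_ideal Iset_codim[OF Q(1)]
    by (auto simp: zeroJ_def Iset_def intro!: exI[of _ "Iset Q"])
qed

lemma X2_VanM:
  assumes "\<And>j l. j < n \<Longrightarrow> 2 * m \<le> l \<Longrightarrow> f (j, l) = 0"
  shows "VanM (monom 1 2) f"
  unfolding VanM_def pstep_monom1 using assms by simp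

lemma gens_RD: "g \<in> Gs \<Longrightarrow> g \<in> RD"
proof -
  assume g: "g \<in> Gs"
  have m1': "1 \<le> m" by (rule m1)
  have X2: "monom (1::'k) 2 \<noteq> 0" by simp
  show ?thesis
  proof (cases "g \<in> range (psi n v)")
    case True
    then obtain c where gc: "g = psi n v c" by blast
    have "VanM [:-c, 1:] g"
      unfolding VanM_def pstep_lin
    proof (intro allI impI)
      fix j l assume j: "j < n"
      have "m dvd (l + m) \<longleftrightarrow> m dvd l" by simp
      moreover have "m dvd l \<Longrightarrow> (l + m) div m = Suc (l div m)" using m1 by auto
      ultimately show "g (j, l + m) - c * g (j, l) = 0"
        using j by (auto simp: gc psi_def Let_def)
    qed
    moreover have "zeroJ g" by (simp add: gc psi_def zeroJ_def)
    ultimately show ?thesis by (auto simp: RD_def intro!: exI[of _ "[:-c, 1:]"])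
  next
    case False
    then have "g = omega n \<xi> \<or> g = E2 n v \<or> g = E1 n" using g by (simp add: Gs_def)
    moreover have "VanM (monom 1 2) (omega n \<xi>)" "VanM (monom 1 2) (E2 n v)" "VanM (monom 1 2) (E1 n)"
      using m1 by (auto intro!: X2_VanM simp: omega_def E2_def E1_def)
    moreover have "zeroJ (omega n \<xi>)" "zeroJ (E2 n v)" "zeroJ (E1 n)"
      by (auto simp: zeroJ_def omega_def E2_def E1_def)
    ultimately show ?thesis using X2 unfolding RD_def by blast
  qed
qed

lemma counit_RD: "counit n \<in> RD"
proof -
  have "VanM (monom 1 2) (counit n)" using m1 by (auto intro!: X2_VanM simp: counit_def)
  moreover have "zeroJ (counit n)" by (auto simp: zeroJ_def counit_def)
  moreover have "monom (1::'k) 2 \<noteq> 0" by simp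
  ultimately show ?thesis unfolding RD_def by blast
qed

lemma GA_RD:
  assumes ac: "alg_closed_field TYPE('k)"
  shows "f \<in> GA \<Longrightarrow> f \<in> RD"
proof (induction rule: gen_alg.induct)
  case (gen f) then show ?case by (rule gens_RD)
next
  case unit then show ?case by (rule counit_RD)
next
  case (add f h) show ?case by (rule RD_add[OF add.IH])
next
  case (smult f c) show ?case by (rule RD_smult[OF smult.IH])
next
  case (mult f h)
  show ?case by (rule conv_Span[OF RD_Span[OF ac mult.IH(1)] RD_Span[OF ac mult.IH(2)]])
qed

end


lemma lin_dep:
  fixes v :: "'i \<Rightarrow> 'a \<Rightarrow> 'k::field"
  assumes "finite A"
  shows "finite K \<Longrightarrow> card A < card K \<Longrightarrow> \<exists>d. (\<exists>k\<in>K. d k \<noteq> 0) \<and> (\<forall>a\<in>A. (\<Sum>k\<in>K. d k * v k a) = 0)"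
  using assms
proof (induction A arbitrary: K v rule: finite_induct)
  case empty
  then obtain k0 where "k0 \<in> K" by (metis card.empty card_gt_0_iff ex_in_conv)
  then show ?case by (intro exI[of _ "\<lambda>k. if k = k0 then 1 else 0"]) auto
next
  case (insert a A)
  show ?case
  proof (cases "\<forall>k\<in>K. v k a = 0")
    case True
    have "card A < card K" using insert by simp
    then obtain d where d: "\<exists>k\<in>K. d k \<noteq> 0" "\<forall>b\<in>A. (\<Sum>k\<in>K. d k * v k b) = 0"
      using insert.IH[OF insert.prems(1)] by blast
    show ?thesis using d True by (intro exI[of _ d]) auto
  next
    case False
    then obtain i where i: "i \<in> K" "v i a \<noteq> 0" by blast
    let ?K' = "K - {i}"
    let ?w = "\<lambda>k b. v k b - (v k a / v i a) * v i b"
    have fK': "finite ?K'" using insert.prems by simp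
    have cK': "card A < card ?K'" using insert.prems insert.hyps i by auto
    obtain d' where d': "\<exists>k\<in>?K'. d' k \<noteq> 0" "\<forall>b\<in>A. (\<Sum>k\<in>?K'. d' k * ?w k b) = 0"
      using insert.IH[OF fK' cK', of ?w] by blast
    define S where "S = (\<Sum>k\<in>?K'. d' k * v k a)"
    define d where "d k = (if k = i then - S / v i a else d' k)" for k
    have split: "(\<Sum>k\<in>K. d k * v k b) = d i * v i b + (\<Sum>k\<in>?K'. d' k * v k b)" for b
      using i insert.prems(1) by (simp add: sum.remove d_def)
    show ?thesis
    proof (intro exI[of _ d] conjI ballI)
      show "\<exists>k\<in>K. d k \<noteq> 0" using d' by (auto simp: d_def)
    next
      fix b assume b: "b \<in> insert a A"
      show "(\<Sum>k\<in>K. d k * v k b) = 0"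
      proof (cases "b = a")
        case True
        show ?thesis unfolding True split using i by (simp add: d_def S_def[symmetric])
      next
        case False
        then have bA: "b \<in> A" using b by simp
        have "(\<Sum>k\<in>?K'. d' k * v k b) = (\<Sum>k\<in>?K'. d' k * ?w k b) + (v i b / v i a) * S"
          by (simp add: S_def sum_distrib_left sum.distrib[symmetric] algebra_simps)
        also have "\<dots> = (v i b / v i a) * S" using d' bA by simp
        finally have "(\<Sum>k\<in>?K'. d' k * v k b) = (v i b / v i a) * S" .
        then show ?thesis unfolding split using i by (simp add: d_def algebra_simps)
      qed
    qed
  qed
qed

lemma ideal_sum:
  assumes I: "is_ideal n \<xi> I"
  shows "finite K \<Longrightarrow> (\<forall>k\<in>K. u k \<in> I) \<Longrightarrow> (\<lambda>p. \<Sum>k\<in>K. d k * u k p) \<in> I"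
proof (induction K rule: finite_induct)
  case empty then show ?case using I by (simp add: is_ideal_def)
next
  case (insert x K)
  have a: "(\<lambda>p. d x * u x p) \<in> I" using I insert.prems by (simp add: is_ideal_def)
  have b: "(\<lambda>p. \<Sum>k\<in>K. d k * u k p) \<in> I" using insert by simp
  have add: "\<forall>a\<in>I. \<forall>b\<in>I. (\<lambda>p. a p + b p) \<in> I" using I by (simp add: is_ideal_def)
  have "(\<lambda>p. (d x * u x p) + (\<Sum>k\<in>K. d k * u k p)) \<in> I"
    using bspec[OF bspec[OF add a] b] by simp
  then show ?case using insert.hyps by simp
qed


context TT
begin

lemma fd_RD:
  assumes f: "f \<in> finite_dual n \<xi>"
  shows "f \<in> RD"
proof -
  obtain I where z0: "\<forall>j l. n \<le> j \<longrightarrow> f (j, l) = 0" and I: "is_ideal n \<xi> I" "finite_codim n I"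
    and fI: "\<forall>a\<in>I. evalf f a = 0"
    using f by (auto simp: finite_dual_def)
  have z: "zeroJ f" using z0 by (simp add: zeroJ_def)
  obtain F where F: "finite F" "F \<subseteq> Hspace n" and Fc: "\<forall>a\<in>Hspace n. \<exists>c. (\<lambda>p. a p - (\<Sum>h\<in>F. c h * h p)) \<in> I"
    using I(2) by (auto simp: finite_codim_def)
  define N where "N = card F"
  let ?K = "{..N}"
  define y where "y k = single (0::nat, m * k) (1::'k)" for k
  have yH: "y k \<in> Hspace n" for k unfolding y_def by (rule Hspace_single) (simp add: n0)
  have "\<forall>k. \<exists>c. (\<lambda>p. y k p - (\<Sum>h\<in>F. c h * h p)) \<in> I" using Fc yH by blast
  from choice[OF this] obtain C where C: "\<And>k. (\<lambda>p. y k p - (\<Sum>h\<in>F. C k h * h p)) \<in> I" by blast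
  obtain d where d: "\<exists>k\<in>?K. d k \<noteq> 0" "\<forall>h\<in>F. (\<Sum>k\<in>?K. d k * C k h) = 0"
    using lin_dep[OF F(1), of ?K C] by (auto simp: N_def)
  have "(\<lambda>p. \<Sum>k\<in>?K. d k * (y k p - (\<Sum>h\<in>F. C k h * h p))) \<in> I"
    using ideal_sum[OF I(1), of ?K "\<lambda>k p. y k p - (\<Sum>h\<in>F. C k h * h p)" d] C by simp
  moreover have "(\<lambda>p. \<Sum>k\<in>?K. d k * (y k p - (\<Sum>h\<in>F. C k h * h p))) = (\<lambda>p. \<Sum>k\<in>?K. d k * y k p)"
  proof
    fix p
    have "(\<Sum>k\<in>?K. d k * (\<Sum>h\<in>F. C k h * h p)) = (\<Sum>h\<in>F. (\<Sum>k\<in>?K. d k * C k h) * h p)"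
      by (simp add: sum_distrib_left sum_distrib_right sum.swap[of _ F] algebra_simps)
    also have "\<dots> = 0" using d(2) by simp
    finally show "(\<Sum>k\<in>?K. d k * (y k p - (\<Sum>h\<in>F. C k h * h p))) = (\<Sum>k\<in>?K. d k * y k p)"
      by (simp add: right_diff_distrib sum_subtractf)
  qed
  ultimately have zI: "(\<lambda>p. \<Sum>k\<in>?K. d k * y k p) \<in> I" by simp
  let ?z = "\<lambda>p. \<Sum>k\<in>?K. d k * y k p"
  let ?B = "(\<lambda>k. (0::nat, m * k)) ` ?K"
  have injB: "inj_on (\<lambda>k. (0::nat, m * k)) ?K" using m1 by (auto simp: inj_on_def)
  have zB: "?z (0, m * k) = d k" if "k \<in> ?K" for k
  proof -
    have "?z (0, m * k) = (\<Sum>k'\<in>?K. if k' = k then d k' else 0)"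
      using m1 by (intro sum.cong refl) (auto simp: y_def single_at)
    then show ?thesis using that by simp
  qed
  have supB: "supp ?z \<subseteq> ?B"
  proof
    fix p assume "p \<in> supp ?z"
    then have "?z p \<noteq> 0" by (simp add: supp_def)
    then obtain k where "k \<in> ?K" "d k * y k p \<noteq> 0" by (rule sum.not_neutral_contains_not_neutral)
    then show "p \<in> ?B" by (auto simp: y_def single_at split: if_splits)
  qed
  have "VanM (\<Sum>k\<in>?K. monom (d k) k) f"
    unfolding VanM_def
  proof (intro allI impI)
    fix j l assume j: "j < n"
    let ?P = "\<Sum>k\<in>?K. monom (d k) k"
    have sH: "single (j, l) (1::'k) \<in> Hspace n" by (rule Hspace_single) (simp add: j)
    have "hmul n \<xi> (single (j, l) 1) ?z \<in> I" using I(1) sH zI by (simp add: is_ideal_def)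
    then have "0 = evalf f (hmul n \<xi> (single (j, l) 1) ?z)" using fI by simp
    also have "\<dots> = (\<Sum>p\<in>{(j, l)}. \<Sum>q\<in>?B. bcoef \<xi> p q * single (j, l) 1 p * ?z q * f (bidx n p q))"
      by (rule evalf_hmul) (auto simp: supp_single_sub supB)
    also have "\<dots> = (\<Sum>q\<in>?B. bcoef \<xi> (j, l) q * single (j, l) 1 (j, l) * ?z q * f (bidx n (j, l) q))"
      by (rule sum_sing)
    also have "\<dots> = (\<Sum>k\<in>?K. bcoef \<xi> (j, l) (0, m * k) * single (j, l) 1 (j, l) * ?z (0, m * k) * f (bidx n (j, l) (0, m * k)))"
      by (rule sum.reindex_cong[OF injB refl]) simp
    also have "\<dots> = (\<Sum>k\<in>?K. d k * f (j, l + m * k))"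
    proof (rule sum.cong[OF refl])
      fix k assume k: "k \<in> ?K"
      have "bcoef \<xi> (j, l) (0, m * k) = 1" by (simp add: bcoef_def)
      moreover have "bidx n (j, l) (0, m * k) = (j, l + m * k)" using j by (simp add: bidx_def)
      moreover have "single (j, l) (1::'k) (j, l) = 1" by (simp add: single_at)
      ultimately show "bcoef \<xi> (j, l) (0, m * k) * single (j, l) 1 (j, l) * ?z (0, m * k) * f (bidx n (j, l) (0, m * k)) = d k * f (j, l + m * k)"
        using zB[OF k] by simp
    qed
    finally have e: "(\<Sum>k\<in>?K. d k * f (j, l + m * k)) = 0" by simp
    have cP: "coeff ?P i = (if i \<le> N then d i else 0)" for i
      by (simp add: coeff_sum coeff_monom)
    have dP: "degree ?P < Suc N"
    proof -
      have "degree ?P \<le> N" by (rule degree_le) (simp add: cP)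
      then show ?thesis by simp
    qed
    have "pstep m ?P (\<lambda>l. f (j, l)) l = (\<Sum>i<Suc N. coeff ?P i * f (j, l + m * i))"
      by (rule pstep_alt[OF dP])
    also have "\<dots> = (\<Sum>k\<in>?K. d k * f (j, l + m * k))"
      by (simp add: cP lessThan_Suc_atMost)
    finally show "pstep m ?P (\<lambda>l. f (j, l)) l = 0" using e by simp
  qed
  moreover have "(\<Sum>k\<in>?K. monom (d k) k) \<noteq> 0"
  proof
    assume "(\<Sum>k\<in>?K. monom (d k) k) = 0"
    then have c0: "coeff (\<Sum>k\<in>?K. monom (d k) k) i = 0" for i by simp
    have "d i = 0" if "i \<in> ?K" for i using c0[of i] that by (simp add: coeff_sum coeff_monom)
    then show False using d(1) by blast
  qed
  ultimately show ?thesis using z by (auto simp: RD_def)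
qed

theorem main:
  assumes ac: "alg_closed_field TYPE('k)"
  shows "finite_dual n \<xi> = gen_alg n v \<xi> (range (psi n v) \<union> {omega n \<xi>, E2 n v, E1 n})"
proof
  show "finite_dual n \<xi> \<subseteq> gen_alg n v \<xi> (range (psi n v) \<union> {omega n \<xi>, E2 n v, E1 n})"
  proof
    fix f assume "f \<in> finite_dual n \<xi>"
    then have "f \<in> GA" by (intro Span_GA RD_Span[OF ac] fd_RD)
    then show "f \<in> gen_alg n v \<xi> (range (psi n v) \<union> {omega n \<xi>, E2 n v, E1 n})" by (simp add: Gs_def)
  qed
  show "gen_alg n v \<xi> (range (psi n v) \<union> {omega n \<xi>, E2 n v, E1 n}) \<subseteq> finite_dual n \<xi>"
  proof
    fix f assume "f \<in> gen_alg n v \<xi> (range (psi n v) \<union> {omega n \<xi>, E2 n v, E1 n})"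
    then have "f \<in> GA" by (simp add: Gs_def)
    then show "f \<in> finite_dual n \<xi>" by (intro RD_fd[OF ac] GA_RD[OF ac])
  qed
qed

end

theorem proposition3p3:
  fixes n v :: nat and \<xi> :: "'k::field_char_0"
  assumes "alg_closed_field TYPE('k)"
    and "1 \<le> n" and "v \<le> n - 1"
    and "\<xi> ^ n = 1" and "\<forall>k. 0 < k \<and> k < n \<longrightarrow> \<xi> ^ k \<noteq> 1"
  shows "finite_dual n \<xi> =
    gen_alg n v \<xi> (range (psi n v) \<union> {omega n \<xi>, E2 n v, E1 n})"
proof -
  interpret TT n v \<xi> using assms(2-5) by unfold_locales
  show ?thesis by (rule main[OF assms(1)])
qed

end
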